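(* Let $n\geq 1$, let $\pi_n$ be a probability distribution on $\{0,1,\dots,n\}$, and let $G$ be a one-dimensional distribution with Lebesgue density. Consider the model selection prior on $\theta\in\mathbb{R}^n$ with sparsity prior $\pi_n$ and factorizing slab $G$. For $c\in[0,\pi_n(n)]$ let $\mu=\mu(c)=(\mu_0,\dots,\mu_n)=\big(\binom{n}{0}^{-1}\pi_n(0),\binom{n}{1}^{-1}\pi_n(1),\dots,\binom{n}{n-1}^{-1}\pi_n(n-1),c\big)\in[0,1]^{n+1}$. (i) If $n=2k+1$ is odd, the model selection prior can be written in spike-and-slab form (for some probability measure $\Lambda_n$ on $[0,1]$) if and only if there exists $c_n\in[0,\pi_n(n)]$ such that, with $\mu=\mu(c_n)$, \[ H_k(\mu)\succeq 0,\quad H_k(F\mu)\succeq 0,\quad (\mu_{k+1},\mu_{k+2},\dots,\mu_{2k+1})^\top\in\mathrm{range}\big(H_k(\mu)\big). \] (ii) If $n=2k$ is even, the model selection prior can be written in spike-and-slab form if and only if there exists $c_n\in[0,\pi_n(n)]$ such that, with $\mu=\mu(c_n)$, \[ H_k(\mu)\succeq 0,\quad H_{k-1}(F\mu)\succeq 0,\quad (\mu_{k+1},\mu_{k+2},\dots,\mu_{2k})^\top\in\mathrm{range}\big(H_{k-1}(F\mu)\big). \]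
   Context: Model selection prior on $\theta=(\theta_1,\dots,\theta_n)$: first draw $s\sim\pi_n$ on $\{0,\dots,n\}$; given $s$, choose a subset $S\subset\{1,\dots,n\}$ with $|S|=s$ uniformly at random; given $S$, let $\theta_i$, $i\in S$, be i.i.d. $G$ and $\theta_i=0$ for $i\notin S$. Spike-and-slab form: there is a probability measure $\Lambda_n$ on $[0,1]$ such that the prior equals: $\alpha\sim\Lambda_n$ and, conditionally on $\alpha$, $\theta_i$ i.i.d. $(1-\alpha)\delta_0+\alpha G$, with $\delta_0$ the point mass at $0$ (same $G$). For a vector $\mu=(\mu_0,\dots,\mu_m)$ with $m\geq 2j$, $H_j(\mu)=[\mu_{a+b}]_{a,b=0,\dots,j}$ is the $(j+1)\times(j+1)$ Hankel matrix, and $F\mu=(\mu_1,\dots,\mu_m)$ drops the first coordinate (re-indexed from $0$). $A\succeq 0$ means $A$ is positive semi-definite, and $\mathrm{range}(A)$ is the column space of $A$. *)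

theory Defs
  imports "HOL-Probability.Probability"
begin

text \<open>Vectors of length n are modelled as functions on the index set {..<n};
  random vectors in R^n as measures on the product space PiM {..<n} (\<lambda>_. borel).\<close>

definition embed_support :: "nat \<Rightarrow> nat set \<Rightarrow> (nat \<Rightarrow> real) \<Rightarrow> (nat \<Rightarrow> real)" where
  "embed_support n S x = restrict (\<lambda>i. if i \<in> S then x i else 0) {..<n}"

definition model_selection_prior ::
  "nat \<Rightarrow> nat pmf \<Rightarrow> real measure \<Rightarrow> (nat \<Rightarrow> real) measure" where
  "model_selection_prior n \<pi> G =
     measure_pmf \<pi> \<bind> (\<lambda>s.
       measure_pmf (pmf_of_set {S. S \<subseteq> {..<n} \<and> card S = s}) \<bind> (\<lambda>S.
         distr (PiM S (\<lambda>_. G)) (PiM {..<n} (\<lambda>_. borel)) (embed_support n S)))"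

definition spike_slab_coord :: "real \<Rightarrow> real measure \<Rightarrow> real measure" where
  "spike_slab_coord \<alpha> G =
     measure_pmf (bernoulli_pmf \<alpha>) \<bind> (\<lambda>b. if b then G else return borel 0)"

definition spike_slab_prior ::
  "nat \<Rightarrow> real measure \<Rightarrow> real measure \<Rightarrow> (nat \<Rightarrow> real) measure" where
  "spike_slab_prior n \<Lambda> G = \<Lambda> \<bind> (\<lambda>\<alpha>. PiM {..<n} (\<lambda>_. spike_slab_coord \<alpha> G))"

definition has_spike_slab_form :: "nat \<Rightarrow> nat pmf \<Rightarrow> real measure \<Rightarrow> bool" where
  "has_spike_slab_form n \<pi> G \<longleftrightarrow>
     (\<exists>\<Lambda>. prob_space \<Lambda> \<and> sets \<Lambda> = sets (borel :: real measure) \<and> emeasure \<Lambda> {0..1} = 1 \<and>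
          model_selection_prior n \<pi> G = spike_slab_prior n \<Lambda> G)"

definition mu_vec :: "nat \<Rightarrow> nat pmf \<Rightarrow> real \<Rightarrow> nat \<Rightarrow> real" where
  "mu_vec n \<pi> c j = (if j < n then pmf \<pi> j / real (n choose j) else if j = n then c else 0)"

text \<open>Hankel matrix H_j(mu) = [mu_(a+b)]_(a,b=0..j), as a function of indices.\<close>
definition hankel :: "nat \<Rightarrow> (nat \<Rightarrow> real) \<Rightarrow> nat \<Rightarrow> nat \<Rightarrow> real" where
  "hankel j \<mu> a b = \<mu> (a + b)"

definition shiftF :: "(nat \<Rightarrow> real) \<Rightarrow> nat \<Rightarrow> real" where
  "shiftF \<mu> i = \<mu> (Suc i)"

definition psd :: "nat \<Rightarrow> (nat \<Rightarrow> nat \<Rightarrow> real) \<Rightarrow> bool" where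
  "psd d A \<longleftrightarrow> (\<forall>x :: nat \<Rightarrow> real. (\<Sum>a\<le>d. \<Sum>b\<le>d. x a * A a b * x b) \<ge> 0)"

definition in_range :: "nat \<Rightarrow> (nat \<Rightarrow> real) \<Rightarrow> (nat \<Rightarrow> nat \<Rightarrow> real) \<Rightarrow> bool" where
  "in_range d v A \<longleftrightarrow> (\<exists>x :: nat \<Rightarrow> real. \<forall>a\<le>d. (\<Sum>b\<le>d. A a b * x b) = v a)"

end

theory Submission
  imports Defs "HOL-Computational_Algebra.Polynomial"
begin

lemma if0_mult: "(if P then x else 0) * (y::real) = (if P then x * y else 0)" by simp
lemma mult_if0: "(y::real) * (if P then x else 0) = (if P then y * x else 0)" by simp

definition qf :: "nat \<Rightarrow> (nat \<Rightarrow> nat \<Rightarrow> real) \<Rightarrow> (nat \<Rightarrow> real) \<Rightarrow> real" where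
  "qf N H y = (\<Sum>a<N. \<Sum>b<N. y a * H a b * y b)"

lemma qf_Suc:
  assumes sym: "\<And>a b. H a b = H b a"
  shows "qf (Suc N) H y = qf N H y + 2 * y N * (\<Sum>b<N. H N b * y b) + y N * H N N * y N"
proof -
  have "qf (Suc N) H y = (\<Sum>a<N. \<Sum>b<N. y a * H a b * y b) + (\<Sum>a<N. y a * H a N * y N)
     + ((\<Sum>b<N. y N * H N b * y b) + y N * H N N * y N)"
    unfolding qf_def by (simp add: sum.distrib)
  also have "(\<Sum>a<N. y a * H a N * y N) = y N * (\<Sum>b<N. H N b * y b)"
    by (simp add: sum_distrib_left sym mult_ac)
  also have "(\<Sum>b<N. y N * H N b * y b) = y N * (\<Sum>b<N. H N b * y b)"
    by (simp add: sum_distrib_left mult_ac)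
  finally show ?thesis unfolding qf_def by simp
qed

lemma qf_cong: "(\<And>i. i < N \<Longrightarrow> y i = z i) \<Longrightarrow> qf N H y = qf N H z"
  unfolding qf_def by (intro sum.cong refl) auto

lemma GL_lt:
  fixes H :: "nat \<Rightarrow> nat \<Rightarrow> real"
  assumes sym: "\<And>a b. H a b = H b a"
    and psd: "\<And>y. qf N H y \<ge> 0"
    and ker: "\<And>y. qf N H y = 0 \<Longrightarrow> (\<Sum>a<N. w a * y a) = 0"
  shows "\<exists>x. \<forall>a<N. (\<Sum>b<N. H a b * x b) = w a"
  using assms
proof (induction N arbitrary: H w)
  case 0
  then show ?case by simp
next
  case (Suc N)
  note sym = Suc.prems(1) and psd = Suc.prems(2) and ker = Suc.prems(3)
  define h where "h = H N N"
  define eN where "eN = (\<lambda>i::nat. if i = N then (1::real) else 0)"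
  have qeN: "qf (Suc N) H eN = h"
    by (subst qf_Suc[OF sym]) (simp add: eN_def h_def qf_def)
  have h0: "h \<ge> 0" using psd[of eN] qeN by simp
  show ?case
  proof (cases "h = 0")
    case True
    have row0: "H a N = 0" if "a < N" for a
    proof (rule ccontr)
      assume ne: "H a N \<noteq> 0"
      define A where "A = H a a"
      define t where "t = - H a N / (A + 1)"
      define y where "y = (\<lambda>i::nat. if i = N then (1::real) else if i = a then t else 0)"
      have A0: "A \<ge> 0"
      proof -
        define ea where "ea = (\<lambda>i::nat. if i = a then (1::real) else 0)"
        have "qf (Suc N) H ea = A"
          using that by (subst qf_Suc[OF sym]) (simp add: ea_def A_def qf_def if0_mult mult_if0 sum.delta)
        then show ?thesis using psd[of ea] by simp
      qed
      have "qf N H y = qf N H (\<lambda>i. if i = a then t else 0)"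
        by (rule qf_cong) (auto simp: y_def)
      also have "\<dots> = t * A * t"
        using that by (simp add: A_def qf_def if0_mult mult_if0 sum.delta)
      finally have "qf N H y = t * A * t" .
      moreover have "(\<Sum>b<N. H N b * y b) = H a N * t"
        using that by (simp add: y_def sym[of N] mult_if0 sum.delta cong: if_cong)
      ultimately have "qf (Suc N) H y = t * A * t + 2 * H a N * t"
        by (subst qf_Suc[OF sym]) (simp add: y_def flip: h_def True)
      also have "\<dots> < 0"
      proof -
        have ne1: "A + 1 > 0" using A0 by linarith
        have "(A+1)^2 * (t * A * t + 2 * H a N * t) = - (H a N * H a N * (A+2))"
        proof -
          have st: "(A+1) * t = - H a N" using ne1 unfolding t_def by simp
          have "(A+1)^2 * (t * A * t + 2 * H a N * t) = A * ((A+1)*t)^2 + 2 * H a N * (A+1) * ((A+1) * t)"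
            by (simp add: algebra_simps power2_eq_square)
          also have "\<dots> = - (H a N * H a N * (A+2))" unfolding st by (simp add: algebra_simps power2_eq_square)
          finally show ?thesis .
        qed
        moreover have "- (H a N * H a N * (A+2)) < 0" proof -
          have "H a N * H a N > 0" using ne by (auto simp add: zero_less_mult_iff linorder_neq_iff)
          then show ?thesis using A0 by (simp add: mult_pos_pos)
        qed
        ultimately have "(A+1)^2 * (t * A * t + 2 * H a N * t) < 0" by simp
        then show ?thesis using ne1 by (simp add: mult_less_0_iff)
      qed
      finally show False using psd[of y] by simp
    qed
    have wN: "w N = 0"
      using ker[of eN] qeN True by (simp add: eN_def)
    have "\<exists>x. \<forall>a<N. (\<Sum>b<N. H a b * x b) = w a"
    proof (rule Suc.IH[OF sym])
      fix y :: "nat \<Rightarrow> real"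
      let ?y = "y(N := 0)"
      have "qf (Suc N) H ?y = qf N H y"
        by (subst qf_Suc[OF sym]) (auto intro: qf_cong)
      then show "qf N H y \<ge> 0" using psd[of ?y] by metis
      assume "qf N H y = 0"
      with \<open>qf (Suc N) H ?y = qf N H y\<close> have "(\<Sum>a<Suc N. w a * ?y a) = 0" using ker by metis
      then show "(\<Sum>a<N. w a * y a) = 0" by simp
    qed
    then obtain x where x: "\<forall>a<N. (\<Sum>b<N. H a b * x b) = w a" by blast
    show ?thesis
    proof (intro exI[of _ "x(N := 0)"] allI impI)
      fix a assume "a < Suc N"
      then consider "a < N" | "a = N" by linarith
      then show "(\<Sum>b<Suc N. H a b * (x(N := 0)) b) = w a"
      proof cases
        case 1
        then show ?thesis using x by simp
      next
        case 2
        have "\<forall>b<N. H N b = 0" using row0 sym by metis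
        then show ?thesis using 2 wN True h_def by simp
      qed
    qed
  next
    case False
    with h0 have hpos: "h > 0" by simp
    define S where "S = (\<lambda>a b. H a b - H a N * H N b / h)"
    define w' where "w' = (\<lambda>a. w a - H a N * w N / h)"
    have symS: "S a b = S b a" for a b unfolding S_def by (simp add: sym mult_ac)
    have key: "qf (Suc N) H (y(N := - (\<Sum>b<N. H N b * y b) / h)) = qf N S y"
      and keyw: "(\<Sum>a<Suc N. w a * (y(N := - (\<Sum>b<N. H N b * y b) / h)) a) = (\<Sum>a<N. w' a * y a)"
      for y
    proof -
      define u where "u = (\<Sum>b<N. H N b * y b)"
      have "qf N S y = qf N H y - (\<Sum>a<N. \<Sum>b<N. y a * H a N * H N b * y b) / h"
        unfolding qf_def S_def by (simp add: algebra_simps sum_subtractf sum_divide_distrib)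
      also have "(\<Sum>a<N. \<Sum>b<N. y a * H a N * H N b * y b) = u * u"
        unfolding u_def by (simp add: sum_product sym[of _ N] mult_ac)
      finally have 1: "qf N S y = qf N H y - u * u / h" .
      have "qf (Suc N) H (y(N := - u / h)) = qf N H y + 2 * (- u / h) * u + (- u / h) * h * (- u / h)"
      proof -
        have "qf N H (y(N := - u / h)) = qf N H y" by (rule qf_cong) auto
        moreover have "(\<Sum>b<N. H N b * (y(N := - u / h)) b) = u" unfolding u_def by simp
        ultimately show ?thesis by (subst qf_Suc[OF sym]) (simp add: h_def)
      qed
      also have "\<dots> = qf N H y - u * u / h" using hpos by (simp add: field_simps power2_eq_square)
      finally show "qf (Suc N) H (y(N := - (\<Sum>b<N. H N b * y b) / h)) = qf N S y"
        using 1 u_def by simp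
      have "(\<Sum>a<Suc N. w a * (y(N := - u / h)) a) = (\<Sum>a<N. w a * y a) - w N * u / h"
        by simp
      also have "\<dots> = (\<Sum>a<N. w' a * y a)"
        unfolding w'_def u_def by (simp add: algebra_simps sum_subtractf sum_divide_distrib sum_distrib_left sym[of _ N])
      finally show "(\<Sum>a<Suc N. w a * (y(N := - (\<Sum>b<N. H N b * y b) / h)) a) = (\<Sum>a<N. w' a * y a)"
        using u_def by simp
    qed
    have "\<exists>x. \<forall>a<N. (\<Sum>b<N. S a b * x b) = w' a"
    proof (rule Suc.IH)
      show "S a b = S b a" for a b by (rule symS)
      show "qf N S y \<ge> 0" for y using psd key by metis
      show "(\<Sum>a<N. w' a * y a) = 0" if "qf N S y = 0" for y
        using ker key keyw that by metis
    qed
    then obtain x where x: "\<forall>a<N. (\<Sum>b<N. S a b * x b) = w' a" by blast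
    define xN where "xN = (w N - (\<Sum>b<N. H N b * x b)) / h"
    show ?thesis
    proof (intro exI[of _ "x(N := xN)"] allI impI)
      fix a assume "a < Suc N"
      then consider "a < N" | "a = N" by linarith
      then show "(\<Sum>b<Suc N. H a b * (x(N := xN)) b) = w a"
      proof cases
        case 1
        have "(\<Sum>b<N. S a b * x b) = (\<Sum>b<N. H a b * x b) - H a N / h * (\<Sum>b<N. H N b * x b)"
          unfolding S_def by (simp add: algebra_simps sum_subtractf sum_divide_distrib sum_distrib_left)
        with x 1 have "(\<Sum>b<N. H a b * x b) = w' a + H a N / h * (\<Sum>b<N. H N b * x b)" by simp
        then show ?thesis using hpos
          by (simp add: w'_def xN_def field_simps h_def)
      next
        case 2
        then show ?thesis using hpos by (simp add: xN_def h_def field_simps)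
      qed
    qed
  qed
qed


definition hfun :: "nat \<Rightarrow> nat \<Rightarrow> real \<Rightarrow> real" where
  "hfun n j \<alpha> = (if 0 \<le> \<alpha> \<and> \<alpha> < 1 then \<alpha>^j * (1-\<alpha>)^(n-j) else 0)"

definition Qp :: "(nat \<Rightarrow> real) \<Rightarrow> nat \<Rightarrow> real \<Rightarrow> real" where
  "Qp x d \<alpha> = (\<Sum>a\<le>d. x a * (\<alpha>^a * (1-\<alpha>)^(d-a)))"

lemma hfun_nonneg: "hfun n j \<alpha> \<ge> 0"
  unfolding hfun_def by auto

lemma hfun_le1: "hfun n j \<alpha> \<le> 1"
  unfolding hfun_def by (auto intro!: mult_le_one power_le_one)

lemma hfun_meas[measurable]: "hfun n j \<in> borel_measurable borel"
  unfolding hfun_def by measurable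

lemma AE01:
  assumes "prob_space L" "sets L = sets borel" "emeasure L {0..1} = 1"
  shows "AE \<alpha> in L. 0 \<le> \<alpha> \<and> \<alpha> \<le> (1::real)"
proof -
  interpret prob_space L by fact
  have ev: "{0..1::real} \<in> sets L" using assms(2) by simp
  have "prob {0..1} = 1" using assms(3) by (simp add: emeasure_eq_measure)
  then have "AE \<alpha> in L. \<alpha> \<in> {0..1}" using AE_in_set_eq_1[OF ev] by simp
  then show ?thesis by simp
qed

lemma meas_L:
  assumes "sets L = sets (borel::real measure)" "f \<in> borel_measurable borel"
  shows "f \<in> borel_measurable L"
  using assms measurable_cong_sets by blast

lemma integrable_hfun:
  assumes "prob_space L" "sets L = sets borel"
  shows "integrable L (hfun n j)"
proof -
  interpret prob_space L by fact
  show ?thesis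
    by (rule integrable_const_bound[where B=1])
       (auto simp: hfun_nonneg hfun_le1 intro!: meas_L[OF assms(2)] abs_le_iff[THEN iffD2])
qed

lemma integrable_bounded01:
  assumes "prob_space L" "sets L = sets borel" "emeasure L {0..1} = 1"
    and "f \<in> borel_measurable borel" and "\<And>x. 0 \<le> x \<Longrightarrow> x \<le> 1 \<Longrightarrow> \<bar>f x\<bar> \<le> B"
  shows "integrable L (f :: real \<Rightarrow> real)"
proof -
  interpret prob_space L by fact
  show ?thesis
  proof (rule integrable_const_bound[where B=B])
    show "AE x in L. norm (f x) \<le> B"
      using AE01[OF assms(1-3)] by (rule eventually_mono) (use assms(5) in auto)
    show "f \<in> borel_measurable L" by (rule meas_L[OF assms(2) assms(4)])
  qed
qed

lemma pw:
  fixes \<alpha> :: real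
  assumes "a \<le> d" "b \<le> d" "e + 2*d \<le> n"
  shows "\<alpha>^(a+b+e) * (1-\<alpha>)^(n-(a+b+e)) = \<alpha>^e * (1-\<alpha>)^(n-2*d-e) * (\<alpha>^a*(1-\<alpha>)^(d-a)) * (\<alpha>^b*(1-\<alpha>)^(d-b))"
proof -
  have "n-(a+b+e) = (n-2*d-e)+(d-a)+(d-b)" using assms by arith
  then show ?thesis by (simp add: power_add mult_ac)
qed

lemma form_eq:
  assumes "e + 2*d \<le> n"
  shows "(\<Sum>a\<le>d. \<Sum>b\<le>d. x a * hfun n (a+b+e) \<alpha> * x b) =
    (if 0 \<le> \<alpha> \<and> \<alpha> < 1 then \<alpha>^e * (1-\<alpha>)^(n-2*d-e) * (Qp x d \<alpha>)^2 else 0)"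
proof (cases "0 \<le> \<alpha> \<and> \<alpha> < 1")
  case True
  have "(\<Sum>a\<le>d. \<Sum>b\<le>d. x a * hfun n (a+b+e) \<alpha> * x b) =
     (\<Sum>a\<le>d. \<Sum>b\<le>d. \<alpha>^e * (1-\<alpha>)^(n-2*d-e) * (x a * (\<alpha>^a*(1-\<alpha>)^(d-a))) * (x b * (\<alpha>^b*(1-\<alpha>)^(d-b))))"
    using True assms by (intro sum.cong refl) (simp add: hfun_def pw mult_ac)
  also have "\<dots> = \<alpha>^e * (1-\<alpha>)^(n-2*d-e) * (Qp x d \<alpha>)^2"
  proof -
    have "(Qp x d \<alpha>)^2 = (\<Sum>a\<le>d. \<Sum>b\<le>d. (x a * (\<alpha>^a*(1-\<alpha>)^(d-a))) * (x b * (\<alpha>^b*(1-\<alpha>)^(d-b))))"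
      unfolding Qp_def power2_eq_square sum_product ..
    then show ?thesis by (simp add: sum_distrib_left mult.assoc)
  qed
  finally show ?thesis using True by simp
next
  case False
  then have "hfun n j \<alpha> = 0" for j unfolding hfun_def by auto
  then show ?thesis using False by auto
qed

lemma psd_part:
  assumes L: "prob_space L" "sets L = sets borel" "emeasure L {0..1} = 1"
    and "e + 2*d \<le> n"
  shows "(\<Sum>a\<le>d. \<Sum>b\<le>d. x a * (\<integral>\<alpha>. hfun n (a+b+e) \<alpha> \<partial>L) * x b) \<ge> 0"
proof -
  have "(\<Sum>a\<le>d. \<Sum>b\<le>d. x a * (\<integral>\<alpha>. hfun n (a+b+e) \<alpha> \<partial>L) * x b) =
      (\<integral>\<alpha>. (\<Sum>a\<le>d. \<Sum>b\<le>d. x a * hfun n (a+b+e) \<alpha> * x b) \<partial>L)"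
    using integrable_hfun[OF L(1,2)] by simp
  also have "\<dots> = (\<integral>\<alpha>. (if 0 \<le> \<alpha> \<and> \<alpha> < 1 then \<alpha>^e * (1-\<alpha>)^(n-2*d-e) * (Qp x d \<alpha>)^2 else 0) \<partial>L)"
    using assms(4) by (simp add: form_eq)
  also have "\<dots> \<ge> 0"
    by (intro integral_nonneg_AE AE_I2) auto
  finally show ?thesis .
qed

lemma range_part:
  assumes L: "prob_space L" "sets L = sets borel" "emeasure L {0..1} = 1"
    and n: "n = e + 2*d + 1"
  shows "\<exists>x. \<forall>a\<le>d. (\<Sum>b\<le>d. (\<integral>\<alpha>. hfun n (a+b+e) \<alpha> \<partial>L) * x b) = (\<integral>\<alpha>. hfun n (e+d+1+a) \<alpha> \<partial>L)"
proof -
  define m where "m j = (\<integral>\<alpha>. hfun n j \<alpha> \<partial>L)" for j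
  note int = integrable_hfun[OF L(1,2)]
  have "\<exists>x. \<forall>a<Suc d. (\<Sum>b<Suc d. m (a+b+e) * x b) = m (e+d+1+a)"
  proof (rule GL_lt)
    show "m (a+b+e) = m (b+a+e)" for a b by (simp add: add.commute)
    show "qf (Suc d) (\<lambda>a b. m (a+b+e)) y \<ge> 0" for y
      using psd_part[OF L, of e d n y] n unfolding qf_def m_def lessThan_Suc_atMost by simp
    fix y assume q0: "qf (Suc d) (\<lambda>a b. m (a+b+e)) y = 0"
    define F where "F \<alpha> = (if 0 \<le> \<alpha> \<and> \<alpha> < 1 then \<alpha>^e * (1-\<alpha>)^(n-2*d-e) * (Qp y d \<alpha>)^2 else 0)" for \<alpha> :: real
    have Fsum: "F \<alpha> = (\<Sum>a\<le>d. \<Sum>b\<le>d. y a * hfun n (a+b+e) \<alpha> * y b)" for \<alpha>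
      using form_eq[of e d n y \<alpha>] n unfolding F_def by simp
    have intF: "integrable L F" unfolding Fsum using int by simp
    have "(\<integral>\<alpha>. F \<alpha> \<partial>L) = qf (Suc d) (\<lambda>a b. m (a+b+e)) y"
      unfolding Fsum qf_def m_def lessThan_Suc_atMost using int by simp
    with q0 have "(\<integral>\<alpha>. F \<alpha> \<partial>L) = 0" by simp
    moreover have "AE \<alpha> in L. 0 \<le> F \<alpha>" by (intro AE_I2) (simp add: F_def)
    ultimately have AEF: "AE \<alpha> in L. F \<alpha> = 0" using integral_nonneg_eq_0_iff_AE[OF intF] by simp
    define G where "G \<alpha> = (if 0 \<le> \<alpha> \<and> \<alpha> < 1 then \<alpha>^(d+1) * (\<alpha>^e * Qp y d \<alpha>) else 0)" for \<alpha> :: real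
    have Gsum: "G \<alpha> = (\<Sum>a\<le>d. hfun n (e+d+1+a) \<alpha> * y a)" for \<alpha>
    proof (cases "0 \<le> \<alpha> \<and> \<alpha> < 1")
      case True
      have "(\<Sum>a\<le>d. hfun n (e+d+1+a) \<alpha> * y a) = (\<Sum>a\<le>d. \<alpha>^(d+1) * \<alpha>^e * (y a * (\<alpha>^a * (1-\<alpha>)^(d-a))))"
      proof (intro sum.cong refl)
        fix a assume "a \<in> {..d}"
        then have "n - (e+d+1+a) = d - a" using n by auto
        then show "hfun n (e+d+1+a) \<alpha> * y a = \<alpha>^(d+1) * \<alpha>^e * (y a * (\<alpha>^a * (1-\<alpha>)^(d-a)))"
          using True by (simp add: hfun_def power_add mult_ac)
      qed
      also have "\<dots> = G \<alpha>" using True unfolding G_def Qp_def by (simp add: sum_distrib_left mult.assoc)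
      finally show ?thesis by simp
    next
      case False
      then have "hfun n j \<alpha> = 0" for j unfolding hfun_def by auto
      then show ?thesis using False unfolding G_def by auto
    qed
    have "AE \<alpha> in L. G \<alpha> = 0"
      using AEF
    proof (rule eventually_mono)
      fix \<alpha> assume "F \<alpha> = 0"
      show "G \<alpha> = 0"
      proof (cases "0 \<le> \<alpha> \<and> \<alpha> < 1")
        case True
        have "n - 2*d - e = 1" using n by simp
        with \<open>F \<alpha> = 0\<close> True have "\<alpha>^e * (1-\<alpha>) * (Qp y d \<alpha>)^2 = 0" by (simp add: F_def)
        with True have "\<alpha>^e = 0 \<or> Qp y d \<alpha> = 0" by auto
        then show ?thesis unfolding G_def by auto
      next
        case False
        then show ?thesis unfolding G_def by auto
      qed
    qed
    then have "(\<integral>\<alpha>. G \<alpha> \<partial>L) = 0" by (rule integral_eq_zero_AE)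
    moreover have "(\<integral>\<alpha>. G \<alpha> \<partial>L) = (\<Sum>a<Suc d. m (e+d+1+a) * y a)"
      unfolding Gsum m_def lessThan_Suc_atMost using int by simp
    ultimately show "(\<Sum>a<Suc d. m (e+d+1+a) * y a) = 0" by simp
  qed
  then show ?thesis unfolding m_def lessThan_Suc_atMost by (simp add: less_Suc_eq_le)
qed


definition BM :: "nat \<Rightarrow> nat pmf \<Rightarrow> real measure \<Rightarrow> bool" where
  "BM n \<pi> L \<longleftrightarrow> prob_space L \<and> sets L = sets borel \<and> emeasure L {0..1} = 1 \<and>
     (\<forall>j\<le>n. (\<integral>\<alpha>. \<alpha>^j * (1-\<alpha>)^(n-j) \<partial>L) = pmf \<pi> j / real (n choose j))"

lemma mu_eq:
  assumes "BM n \<pi> L" "j \<le> n"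
  shows "mu_vec n \<pi> (\<integral>\<alpha>. hfun n n \<alpha> \<partial>L) j = (\<integral>\<alpha>. hfun n j \<alpha> \<partial>L)"
proof (cases "j < n")
  case True
  have L: "prob_space L" "sets L = sets borel" "emeasure L {0..1} = 1" using assms(1) by (auto simp: BM_def)
  have "(\<integral>\<alpha>. \<alpha>^j * (1-\<alpha>)^(n-j) \<partial>L) = (\<integral>\<alpha>. hfun n j \<alpha> \<partial>L)"
  proof (rule integral_cong_AE)
    show "(\<lambda>\<alpha>::real. \<alpha>^j * (1-\<alpha>)^(n-j)) \<in> borel_measurable L" by (rule meas_L[OF L(2)]) simp
    show "hfun n j \<in> borel_measurable L" by (rule meas_L[OF L(2)]) simp
    show "AE \<alpha> in L. \<alpha>^j * (1-\<alpha>)^(n-j) = hfun n j \<alpha>"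
      using AE01[OF L] by (rule eventually_mono) (use True in \<open>auto simp: hfun_def\<close>)
  qed
  then show ?thesis using assms True by (simp add: mu_vec_def BM_def)
qed (use assms in \<open>simp add: mu_vec_def\<close>)

lemma c_range:
  assumes "BM n \<pi> L"
  shows "(\<integral>\<alpha>. hfun n n \<alpha> \<partial>L) \<in> {0..pmf \<pi> n}"
proof -
  have L: "prob_space L" "sets L = sets borel" "emeasure L {0..1} = 1" using assms(1) by (auto simp: BM_def)
  have "(\<integral>\<alpha>. hfun n n \<alpha> \<partial>L) \<le> (\<integral>\<alpha>. \<alpha>^n * (1-\<alpha>)^(n-n) \<partial>L)"
  proof (rule integral_mono_AE)
    show "integrable L (hfun n n)" by (rule integrable_hfun[OF L(1,2)])
    show "integrable L (\<lambda>\<alpha>::real. \<alpha>^n * (1-\<alpha>)^(n-n))"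
      by (rule integrable_bounded01[OF L, where B=1]) (auto simp: abs_le_iff intro: power_le_one)
    show "AE \<alpha> in L. hfun n n \<alpha> \<le> \<alpha>^n * (1-\<alpha>)^(n-n)"
      using AE01[OF L] by (rule eventually_mono) (auto simp: hfun_def)
  qed
  also have "\<dots> = pmf \<pi> n" using assms unfolding BM_def by (metis binomial_n_n div_by_1 order_refl of_nat_1)
  finally show ?thesis by (auto intro!: integral_nonneg_AE AE_I2 hfun_nonneg)
qed

lemma psd_from_BM:
  assumes "BM n \<pi> L" "e + 2*d \<le> n"
  shows "psd d (hankel d (\<lambda>i. mu_vec n \<pi> (\<integral>\<alpha>. hfun n n \<alpha> \<partial>L) (i + e)))"
  unfolding psd_def hankel_def
proof
  fix x :: "nat \<Rightarrow> real"
  have L: "prob_space L" "sets L = sets borel" "emeasure L {0..1} = 1" using assms(1) by (auto simp: BM_def)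
  have "(\<Sum>a\<le>d. \<Sum>b\<le>d. x a * mu_vec n \<pi> (\<integral>\<alpha>. hfun n n \<alpha> \<partial>L) (a + b + e) * x b) =
        (\<Sum>a\<le>d. \<Sum>b\<le>d. x a * (\<integral>\<alpha>. hfun n (a+b+e) \<alpha> \<partial>L) * x b)"
    using assms by (intro sum.cong refl) (simp add: mu_eq)
  also have "\<dots> \<ge> 0" by (rule psd_part[OF L assms(2)])
  finally show "0 \<le> (\<Sum>a\<le>d. \<Sum>b\<le>d. x a * mu_vec n \<pi> (\<integral>\<alpha>. hfun n n \<alpha> \<partial>L) (a + b + e) * x b)" .
qed

lemma range_from_BM:
  assumes "BM n \<pi> L" "n = e + 2*d + 1"
  shows "in_range d (\<lambda>i. mu_vec n \<pi> (\<integral>\<alpha>. hfun n n \<alpha> \<partial>L) (e + d + 1 + i))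
           (hankel d (\<lambda>i. mu_vec n \<pi> (\<integral>\<alpha>. hfun n n \<alpha> \<partial>L) (i + e)))"
proof -
  have L: "prob_space L" "sets L = sets borel" "emeasure L {0..1} = 1" using assms(1) by (auto simp: BM_def)
  obtain x where x: "\<forall>a\<le>d. (\<Sum>b\<le>d. (\<integral>\<alpha>. hfun n (a+b+e) \<alpha> \<partial>L) * x b) = (\<integral>\<alpha>. hfun n (e+d+1+a) \<alpha> \<partial>L)"
    using range_part[OF L assms(2)] by blast
  show ?thesis unfolding in_range_def hankel_def
  proof (intro exI allI impI)
    fix a assume a: "a \<le> d"
    have "(\<Sum>b\<le>d. mu_vec n \<pi> (\<integral>\<alpha>. hfun n n \<alpha> \<partial>L) (a + b + e) * x b) =
        (\<Sum>b\<le>d. (\<integral>\<alpha>. hfun n (a+b+e) \<alpha> \<partial>L) * x b)"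
      using assms a by (intro sum.cong refl) (simp add: mu_eq)
    also have "\<dots> = (\<integral>\<alpha>. hfun n (e+d+1+a) \<alpha> \<partial>L)" using x a by simp
    also have "\<dots> = mu_vec n \<pi> (\<integral>\<alpha>. hfun n n \<alpha> \<partial>L) (e + d + 1 + a)"
      using assms a by (simp add: mu_eq)
    finally show "(\<Sum>b\<le>d. mu_vec n \<pi> (\<integral>\<alpha>. hfun n n \<alpha> \<partial>L) (a + b + e) * x b) =
        mu_vec n \<pi> (\<integral>\<alpha>. hfun n n \<alpha> \<partial>L) (e + d + 1 + a)" .
  qed
qed

lemma necessity:
  assumes "BM n \<pi> L" "n \<ge> 1"
  shows "(\<forall>k. n = 2 * k + 1 \<longrightarrow>
             (\<exists>c \<in> {0..pmf \<pi> n}.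
                psd k (hankel k (mu_vec n \<pi> c)) \<and>
                psd k (hankel k (shiftF (mu_vec n \<pi> c))) \<and>
                in_range k (\<lambda>i. mu_vec n \<pi> c (k + 1 + i)) (hankel k (mu_vec n \<pi> c))))
       \<and> (\<forall>k. n = 2 * k \<longrightarrow>
             (\<exists>c \<in> {0..pmf \<pi> n}.
                psd k (hankel k (mu_vec n \<pi> c)) \<and>
                psd (k - 1) (hankel (k - 1) (shiftF (mu_vec n \<pi> c))) \<and>
                in_range (k - 1) (\<lambda>i. mu_vec n \<pi> c (k + 1 + i))
                  (hankel (k - 1) (shiftF (mu_vec n \<pi> c)))))"
proof -
  define c where "c = (\<integral>\<alpha>. hfun n n \<alpha> \<partial>L)"
  have c: "c \<in> {0..pmf \<pi> n}" unfolding c_def by (rule c_range[OF assms(1)])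
  have sh0: "(\<lambda>i. mu_vec n \<pi> c (i + 0)) = mu_vec n \<pi> c" by simp
  have sh1: "(\<lambda>i. mu_vec n \<pi> c (i + 1)) = shiftF (mu_vec n \<pi> c)" by (simp add: shiftF_def fun_eq_iff)
  show ?thesis
  proof (intro conjI allI impI)
    fix k assume n: "n = 2 * k + 1"
    have p1: "psd k (hankel k (mu_vec n \<pi> c))"
      using psd_from_BM[OF assms(1), of 0 k] n unfolding sh0 c_def[symmetric] by simp
    have p2: "psd k (hankel k (shiftF (mu_vec n \<pi> c)))"
      using psd_from_BM[OF assms(1), of 1 k] n unfolding sh1 c_def[symmetric] by simp
    have r: "in_range k (\<lambda>i. mu_vec n \<pi> c (k + 1 + i)) (hankel k (mu_vec n \<pi> c))"
      using range_from_BM[OF assms(1), of 0 k] n unfolding sh0 c_def[symmetric] by simp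
    show "\<exists>c \<in> {0..pmf \<pi> n}. psd k (hankel k (mu_vec n \<pi> c)) \<and>
                psd k (hankel k (shiftF (mu_vec n \<pi> c))) \<and>
                in_range k (\<lambda>i. mu_vec n \<pi> c (k + 1 + i)) (hankel k (mu_vec n \<pi> c))"
      using c p1 p2 r by blast
  next
    fix k assume n: "n = 2 * k"
    with assms(2) have k: "k \<ge> 1" by simp
    have p1: "psd k (hankel k (mu_vec n \<pi> c))"
      using psd_from_BM[OF assms(1), of 0 k] n unfolding sh0 c_def[symmetric] by simp
    have p2: "psd (k-1) (hankel (k-1) (shiftF (mu_vec n \<pi> c)))"
      using psd_from_BM[OF assms(1), of 1 "k-1"] n k unfolding sh1 c_def[symmetric] by simp
    have e: "1 + (k - 1) + 1 + i = k + 1 + i" for i using k by simp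
    have n': "n = 1 + 2 * (k - 1) + 1" using n k by simp
    have r: "in_range (k-1) (\<lambda>i. mu_vec n \<pi> c (k + 1 + i)) (hankel (k-1) (shiftF (mu_vec n \<pi> c)))"
      using range_from_BM[OF assms(1) n'] unfolding sh1 c_def[symmetric] e .
    show "\<exists>c \<in> {0..pmf \<pi> n}. psd k (hankel k (mu_vec n \<pi> c)) \<and>
                psd (k - 1) (hankel (k - 1) (shiftF (mu_vec n \<pi> c))) \<and>
                in_range (k - 1) (\<lambda>i. mu_vec n \<pi> c (k + 1 + i))
                  (hankel (k - 1) (shiftF (mu_vec n \<pi> c)))"
      using c p1 p2 r by blast
  qed
qed


inductive pcone :: "nat \<Rightarrow> real poly \<Rightarrow> bool" for m where
  zero: "pcone m 0"
| sq: "2 * degree f \<le> m \<Longrightarrow> pcone m (f * f)"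
| tsq: "2 * degree g + 1 \<le> m \<Longrightarrow> pcone m ([:0,1:] * (g * g))"
| add: "pcone m p \<Longrightarrow> pcone m q \<Longrightarrow> pcone m (p + q)"

lemma pcone_mono: "pcone m p \<Longrightarrow> m \<le> m' \<Longrightarrow> pcone m' p"
proof (induction rule: pcone.induct)
  case zero show ?case by (rule pcone.zero)
next
  case (sq f) then show ?case by (intro pcone.sq) simp
next
  case (tsq g) then show ?case by (intro pcone.tsq) simp
next
  case (add p q) then show ?case by (intro pcone.add) simp_all
qed

lemma deg_minus_const:
  fixes q :: "real poly"
  assumes "degree q \<ge> 1"
  shows "degree (q - [:c:]) = degree q \<and> lead_coeff (q - [:c:]) = lead_coeff q"
proof -
  have e: "q - [:c:] = q + [:-c:]" by simp
  have d: "degree (q + [:-c:]) = degree q" using assms by (intro degree_add_eq_left) simp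
  moreover have "coeff (q + [:-c:]) (degree q) = coeff q (degree q)" using assms by (cases "degree q") auto
  ultimately show ?thesis unfolding e by simp
qed

lemma pcone_const: "c \<ge> 0 \<Longrightarrow> pcone m [:c:]"
proof -
  assume "c \<ge> 0"
  then have "[:c:] = [:sqrt c:] * [:sqrt c:]" by simp
  moreover have "pcone m ([:sqrt c:] * [:sqrt c:])" by (rule pcone.sq) simp
  ultimately show ?thesis by simp
qed

lemma pcone_mult_x: "pcone m p \<Longrightarrow> pcone (m+1) ([:0,1:] * p)"
proof (induction rule: pcone.induct)
  case zero then show ?case by (simp add: pcone.zero)
next
  case (sq f) then show ?case by (intro pcone.tsq) simp
next
  case (tsq g)
  have "degree ([:0,1:] * g) \<le> 1 + degree g"
    using degree_mult_le[of "[:0,1:]" g] by simp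
  then have "pcone (m+1) (([:0,1:] * g) * ([:0,1:] * g))"
    using tsq by (intro pcone.sq) simp
  then show ?case by (simp add: mult_ac)
next
  case (add p q) show ?case unfolding distrib_left by (rule pcone.add[OF add.IH])
qed

lemma pcone_mult_sq:
  assumes "pcone m p" "degree r \<le> 1"
  shows "pcone (m+2) (r * r * p)"
  using assms(1)
proof (induction rule: pcone.induct)
  case zero then show ?case by (simp add: pcone.zero)
next
  case (sq f)
  have "degree (r * f) \<le> 1 + degree f" using degree_mult_le[of r f] assms(2) by simp
  then have "pcone (m+2) ((r * f) * (r * f))" using sq by (intro pcone.sq) simp
  then show ?case by (simp add: mult_ac)
next
  case (tsq g)
  have "degree (r * g) \<le> 1 + degree g" using degree_mult_le[of r g] assms(2) by simp
  then have "pcone (m+2) ([:0,1:] * ((r * g) * (r * g)))" using tsq by (intro pcone.tsq) simp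
  then show ?case by (simp add: mult_ac)
next
  case (add p q) show ?case unfolding distrib_left by (rule pcone.add[OF add.IH])
qed

lemma poly_nonneg_at_right:
  fixes p :: "real poly"
  assumes "\<And>t. t > a \<Longrightarrow> poly p t \<ge> 0"
  shows "poly p a \<ge> 0"
proof (rule tendsto_lowerbound)
  show "(poly p \<longlongrightarrow> poly p a) (at_right a)"
    by (intro tendsto_poly tendsto_ident_at)
  show "\<forall>\<^sub>F t in at_right a. 0 \<le> poly p t"
    using eventually_at_right_less[of a] by (rule eventually_mono) (use assms in auto)
  show "at_right a \<noteq> bot" by simp
qed

lemma lc_pos:
  fixes q :: "real poly"
  assumes "degree q \<ge> 1" "\<And>t. t \<ge> 0 \<Longrightarrow> poly q t \<ge> 0"
  shows "lead_coeff q > 0"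
proof (rule ccontr)
  assume "\<not> lead_coeff q > 0"
  moreover have "lead_coeff q \<noteq> 0" using assms(1) by auto
  ultimately have "lead_coeff q < 0" by linarith
  then have "lead_coeff (-q) > 0" by simp
  then obtain N where N: "\<forall>x\<ge>N. poly (-q) x \<ge> lead_coeff (-q)" using poly_pinfty_gt_lc by blast
  have "poly (-q) (max N 0) \<ge> lead_coeff (-q)" using N by simp
  with \<open>lead_coeff (-q) > 0\<close> have "poly q (max N 0) < 0" by simp
  with assms(2)[of "max N 0"] show False by simp
qed

lemma poly_min_exists:
  fixes q :: "real poly"
  assumes "degree q \<ge> 1" "\<And>t. t \<ge> 0 \<Longrightarrow> poly q t \<ge> 0"
  shows "\<exists>t0\<ge>0. \<forall>t\<ge>0. poly q t0 \<le> poly q t"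
proof -
  define q' where "q' = q - [:poly q 0:]"
  have dq': "degree q' = degree q" and "lead_coeff q' = lead_coeff q"
    unfolding q'_def using deg_minus_const[OF assms(1), of "poly q 0"] by auto
  with lc_pos[OF assms] have "lead_coeff q' > 0" by simp
  then obtain R where R: "\<forall>x\<ge>R. poly q' x \<ge> lead_coeff q'" using poly_pinfty_gt_lc by blast
  have R': "poly q x \<ge> poly q 0" if "x \<ge> max R 0" for x
    using R that \<open>lead_coeff q' > 0\<close> by (fastforce simp: q'_def)
  obtain t0 where t0: "t0 \<in> {0..max R 0}" "\<forall>y\<in>{0..max R 0}. poly q t0 \<le> poly q y"
  proof -
    have "continuous_on {0..max R 0} (poly q)"
      by (rule continuous_at_imp_continuous_on) simp
    then show ?thesis using continuous_attains_inf[of "{0..max R 0}" "poly q"] that by auto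
  qed
  show ?thesis
  proof (intro exI[of _ t0] conjI allI impI)
    show "t0 \<ge> 0" using t0 by simp
    fix t :: real assume "t \<ge> 0"
    show "poly q t0 \<le> poly q t"
    proof (cases "t \<le> max R 0")
      case True then show ?thesis using t0 \<open>t \<ge> 0\<close> by auto
    next
      case False
      then have "poly q t \<ge> poly q 0" using R'[of t] by linarith
      moreover have "poly q t0 \<le> poly q 0" using t0 by auto
      ultimately show ?thesis by simp
    qed
  qed
qed

lemma nonneg_pcone:
  fixes q :: "real poly"
  assumes "\<And>t. t \<ge> 0 \<Longrightarrow> poly q t \<ge> 0"
  shows "pcone (degree q) q"
  using assms
proof (induction "degree q" arbitrary: q rule: less_induct)
  case less
  show ?case
  proof (cases "degree q = 0")
    case True
    then obtain c where c: "q = [:c:]" by (metis degree_eq_zeroE)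
    with less.prems[of 0] have "c \<ge> 0" by simp
    then show ?thesis using c pcone_const by simp
  next
    case False
    then have dq: "degree q \<ge> 1" by simp
    obtain t0 where t0: "t0 \<ge> 0" "\<forall>t\<ge>0. poly q t0 \<le> poly q t"
      using poly_min_exists[OF dq less.prems] by blast
    define \<delta> where "\<delta> = poly q t0"
    define p where "p = q - [:\<delta>:]"
    have dp: "degree p = degree q" unfolding p_def using deg_minus_const[OF dq, of \<delta>] by auto
    have pnn: "poly p t \<ge> 0" if "t \<ge> 0" for t using t0 that by (simp add: p_def \<delta>_def)
    have pt0: "poly p t0 = 0" by (simp add: p_def \<delta>_def)
    have \<delta>0: "\<delta> \<ge> 0" using less.prems t0 by (simp add: \<delta>_def)
    have qp: "q = p + [:\<delta>:]" by (simp add: p_def)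
    have "pcone (degree q) p"
    proof (cases "t0 = 0")
      case True
      then obtain p1 where p1: "p = [:0,1:] * p1" using pt0 poly_eq_0_iff_dvd[of p 0] by (auto elim: dvdE)
      have "p \<noteq> 0" using dp dq by auto
      then have "p1 \<noteq> 0" using p1 by auto
      then have dp1: "degree p = degree p1 + 1" using p1 by (simp add: degree_mult_eq)
      have p1nn: "poly p1 t \<ge> 0" if "t \<ge> 0" for t
      proof (rule poly_nonneg_at_right)
        fix s :: real assume "s > t"
        with that have "s > 0" by simp
        with pnn[of s] p1 show "poly p1 s \<ge> 0" by (simp add: zero_le_mult_iff)
      qed
      have "pcone (degree p1) p1" using less.hyps[of p1] dp1 dp p1nn by simp
      then have "pcone (degree p1 + 1) ([:0,1:] * p1)" by (rule pcone_mult_x)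
      then show ?thesis using p1 dp1 dp by simp
    next
      case False
      with t0 have tpos: "t0 > 0" by simp
      have deriv0: "poly (pderiv p) t0 = 0"
      proof -
        have D: "DERIV (poly p) t0 :> poly (pderiv p) t0" by simp
        have "\<forall>y. \<bar>t0 - y\<bar> < t0 \<longrightarrow> poly p t0 \<le> poly p y"
          using pnn pt0 by auto
        then show ?thesis using DERIV_local_min[OF D tpos] by blast
      qed
      define r where "r = [:-t0, 1:]"
      obtain p1 where p1: "p = r * p1" using pt0 poly_eq_0_iff_dvd[of p t0] by (auto elim: dvdE simp: r_def)
      have "pderiv p = r * pderiv p1 + p1 * pderiv r" unfolding p1 by (rule pderiv_mult)
      then have "poly p1 t0 = 0" using deriv0 by (simp add: r_def pderiv_pCons)
      then obtain p2 where p2: "p1 = r * p2" using poly_eq_0_iff_dvd[of p1 t0] by (auto elim: dvdE simp: r_def)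
      have pr: "p = r * r * p2" using p1 p2 by (simp add: mult_ac)
      have "p \<noteq> 0" using dp dq by auto
      then have "p2 \<noteq> 0" using pr by auto
      moreover have "r \<noteq> 0" "degree r = 1" by (simp_all add: r_def)
      ultimately have dp2: "degree p = degree p2 + 2" using pr
        by (metis add.commute degree_mult_eq mult_eq_0_iff one_add_one add.assoc)
      have A: "poly p2 s \<ge> 0" if "s \<ge> 0" "s \<noteq> t0" for s
      proof -
        from that have "s - t0 \<noteq> 0" by simp
        then have "(s - t0) * (s - t0) > 0" by (auto simp add: zero_less_mult_iff linorder_neq_iff)
        moreover have "poly p s \<ge> 0" using pnn that by simp
        moreover have "poly p s = ((s - t0) * (s - t0)) * poly p2 s"
          unfolding pr r_def by (simp add: algebra_simps)
        ultimately show "poly p2 s \<ge> 0" by (simp add: zero_le_mult_iff)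
      qed
      have p2nn: "poly p2 t \<ge> 0" if "t \<ge> 0" for t
      proof (cases "t = t0")
        case True
        show ?thesis unfolding True by (rule poly_nonneg_at_right) (use A t0 in auto)
      qed (use A that in auto)
      have "pcone (degree p2) p2" using less.hyps[of p2] dp2 dp p2nn by simp
      then have "pcone (degree p2 + 2) (r * r * p2)" by (rule pcone_mult_sq) (simp add: r_def)
      then show ?thesis using pr dp2 dp by simp
    qed
    moreover have "pcone (degree q) [:\<delta>:]" using \<delta>0 by (rule pcone_const)
    ultimately show ?thesis using qp by (simp add: pcone.add)
  qed
qed


definition Lf :: "nat \<Rightarrow> (nat \<Rightarrow> real) \<Rightarrow> real poly \<Rightarrow> real" where
  "Lf n \<mu> q = (\<Sum>j\<le>n. coeff q j * \<mu> j)"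

lemma Lf_add: "Lf n \<mu> (p + q) = Lf n \<mu> p + Lf n \<mu> q"
  by (simp add: Lf_def algebra_simps sum.distrib)

lemma if0_mult': "(if P then x else 0) * (y::real) = (if P then x * y else 0)" by simp

lemma pair_prod:
  fixes p q :: "real poly"
  assumes "degree p \<le> D1" "degree q \<le> D2" "D1 + D2 + e \<le> n"
  shows "Lf n \<mu> (monom 1 e * (p * q)) = (\<Sum>a\<le>D1. \<Sum>b\<le>D2. coeff p a * coeff q b * \<mu> (a+b+e))"
proof -
  have "p * q = (\<Sum>a\<le>D1. monom (coeff p a) a) * (\<Sum>b\<le>D2. monom (coeff q b) b)"
    using poly_as_sum_of_monoms'[OF assms(1)] poly_as_sum_of_monoms'[OF assms(2)] by simp
  also have "\<dots> = (\<Sum>a\<le>D1. \<Sum>b\<le>D2. monom (coeff p a) a * monom (coeff q b) b)"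
    by (rule sum_product)
  finally have "monom 1 e * (p * q) = (\<Sum>a\<le>D1. \<Sum>b\<le>D2. monom (coeff p a * coeff q b) (a+b+e))"
    by (simp add: sum_distrib_left mult_monom add.commute add.left_commute)
  then have "Lf n \<mu> (monom 1 e * (p * q)) =
      (\<Sum>j\<le>n. (\<Sum>a\<le>D1. \<Sum>b\<le>D2. (if a+b+e = j then coeff p a * coeff q b else 0)) * \<mu> j)"
    by (simp add: Lf_def coeff_sum)
  also have "\<dots> = (\<Sum>j\<le>n. \<Sum>a\<le>D1. \<Sum>b\<le>D2. (if a+b+e = j then coeff p a * coeff q b * \<mu> j else 0))"
    by (simp add: sum_distrib_right if0_mult')
  also have "\<dots> = (\<Sum>a\<le>D1. \<Sum>j\<le>n. \<Sum>b\<le>D2. (if a+b+e = j then coeff p a * coeff q b * \<mu> j else 0))"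
    by (rule sum.swap)
  also have "\<dots> = (\<Sum>a\<le>D1. \<Sum>b\<le>D2. \<Sum>j\<le>n. (if a+b+e = j then coeff p a * coeff q b * \<mu> j else 0))"
    by (rule sum.cong[OF refl], rule sum.swap)
  also have "\<dots> = (\<Sum>a\<le>D1. \<Sum>b\<le>D2. coeff p a * coeff q b * \<mu> (a+b+e))"
  proof (intro sum.cong refl)
    fix a b assume "a \<in> {..D1}" "b \<in> {..D2}"
    then have "a + b + e \<in> {..n}" using assms(3) by auto
    then show "(\<Sum>j\<le>n. (if a+b+e = j then coeff p a * coeff q b * \<mu> j else 0)) = coeff p a * coeff q b * \<mu> (a+b+e)"
      by (simp add: sum.delta)
  qed
  finally show ?thesis .
qed

lemma pcone_pos:
  assumes psdA: "psd k (hankel k \<mu>)" and psdB: "psd d (hankel d (shiftF \<mu>))"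
    and n: "2*k \<le> n" "2*d+1 \<le> n" "n \<le> 2*k+1" "n \<le> 2*d+2"
    and "pcone m q" "m \<le> n"
  shows "Lf n \<mu> q \<ge> 0"
  using assms(7,8)
proof (induction rule: pcone.induct)
  case zero then show ?case by (simp add: Lf_def)
next
  case (sq f)
  then have df: "degree f \<le> k" using n by linarith
  have "Lf n \<mu> (f * f) = Lf n \<mu> (monom 1 0 * (f * f))" by (simp add: monom_0 one_pCons)
  also have "\<dots> = (\<Sum>a\<le>k. \<Sum>b\<le>k. coeff f a * coeff f b * \<mu> (a+b+0))"
    using df n by (intro pair_prod) auto
  also have "\<dots> = (\<Sum>a\<le>k. \<Sum>b\<le>k. coeff f a * hankel k \<mu> a b * coeff f b)"
    by (simp add: hankel_def mult_ac)
  also have "\<dots> \<ge> 0" using psdA unfolding psd_def by blast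
  finally show ?case .
next
  case (tsq g)
  then have dg: "degree g \<le> d" using n by linarith
  have "Lf n \<mu> ([:0,1:] * (g * g)) = Lf n \<mu> (monom 1 1 * (g * g))" by (simp add: monom_altdef)
  also have "\<dots> = (\<Sum>a\<le>d. \<Sum>b\<le>d. coeff g a * coeff g b * \<mu> (a+b+1))"
    using dg n by (intro pair_prod) auto
  also have "\<dots> = (\<Sum>a\<le>d. \<Sum>b\<le>d. coeff g a * hankel d (shiftF \<mu>) a b * coeff g b)"
    by (simp add: hankel_def shiftF_def mult_ac)
  also have "\<dots> \<ge> 0" using psdB unfolding psd_def by blast
  finally show ?case .
next
  case (add p q) then show ?case by (simp add: Lf_add)
qed

lemma bern_identity:
  fixes t :: real
  assumes "t \<ge> 0" "j \<le> n"
  shows "t^j = (1+t)^n * ((t/(1+t))^j * (1 - t/(1+t))^(n-j))"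
proof -
  have ne: "1 + t \<noteq> 0" using assms by linarith
  have "1 - t/(1+t) = 1/(1+t)" using ne by (simp add: field_simps)
  then have "(1+t)^n * ((t/(1+t))^j * (1 - t/(1+t))^(n-j)) = (1+t)^n * (t^j / ((1+t)^j * (1+t)^(n-j)))"
    by (simp add: power_divide)
  also have "(1+t)^j * (1+t)^(n-j) = (1+t)^n" using assms(2) by (simp flip: power_add)
  finally show ?thesis using ne by simp
qed

lemma functional_pos:
  fixes \<pi> :: "nat pmf"
  assumes c: "c \<in> {0..pmf \<pi> n}"
    and psdA: "psd k (hankel k (mu_vec n \<pi> c))" and psdB: "psd d (hankel d (shiftF (mu_vec n \<pi> c)))"
    and n: "2*k \<le> n" "2*d+1 \<le> n" "n \<le> 2*k+1" "n \<le> 2*d+2"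
    and ypos: "\<And>\<alpha>. 0 \<le> \<alpha> \<Longrightarrow> \<alpha> \<le> 1 \<Longrightarrow> (\<Sum>j\<le>n. y j * (\<alpha>^j * (1-\<alpha>)^(n-j))) \<ge> 0"
  shows "(\<Sum>j\<le>n. y j * (pmf \<pi> j / real (n choose j))) \<ge> 0"
proof -
  define \<mu> where "\<mu> = mu_vec n \<pi> c"
  define q where "q = (\<Sum>j\<le>n. monom (y j) j)"
  have dq: "degree q \<le> n" unfolding q_def
    by (rule degree_sum_le) (auto intro: order.trans[OF degree_monom_le])
  have qnn: "poly q t \<ge> 0" if "t \<ge> 0" for t
  proof -
    have "poly q t = (\<Sum>j\<le>n. y j * t^j)" by (simp add: q_def poly_sum poly_monom)
    also have "\<dots> = (1+t)^n * (\<Sum>j\<le>n. y j * ((t/(1+t))^j * (1 - t/(1+t))^(n-j)))"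
      unfolding sum_distrib_left using that
      by (intro sum.cong refl) (subst bern_identity[of t], auto simp: mult_ac)
    also have "\<dots> \<ge> 0" using that by (intro mult_nonneg_nonneg ypos) auto
    finally show ?thesis .
  qed
  have "pcone (degree q) q" by (rule nonneg_pcone) (use qnn in auto)
  then have "pcone n q" using dq by (rule pcone_mono)
  then have L: "Lf n \<mu> q \<ge> 0"
    using pcone_pos[OF psdA[folded \<mu>_def] psdB[folded \<mu>_def] n] by blast
  have "Lf n \<mu> q = (\<Sum>j\<le>n. y j * \<mu> j)"
    unfolding Lf_def q_def by (intro sum.cong refl) (simp add: coeff_sum_monom)
  also have "\<dots> = (\<Sum>j<n. y j * (pmf \<pi> j / real (n choose j))) + y n * c"
    by (simp add: lessThan_Suc_atMost[symmetric] \<mu>_def mu_vec_def)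
  finally have L2: "(\<Sum>j<n. y j * (pmf \<pi> j / real (n choose j))) + y n * c \<ge> 0" using L by simp
  have yn: "y n \<ge> 0"
  proof -
    have "(\<Sum>j\<le>n. y j * (1^j * (1-1::real)^(n-j))) = (\<Sum>j<n. y j * (1^j * (1-1::real)^(n-j))) + y n"
      by (simp add: lessThan_Suc_atMost[symmetric])
    moreover have "(\<Sum>j<n. y j * (1^j * (1-1::real)^(n-j))) = 0"
      by (intro sum.neutral) auto
    ultimately show ?thesis using ypos[of 1] by simp
  qed
  have "(\<Sum>j\<le>n. y j * (pmf \<pi> j / real (n choose j))) = (\<Sum>j<n. y j * (pmf \<pi> j / real (n choose j))) + y n * pmf \<pi> n"
    by (simp add: lessThan_Suc_atMost[symmetric])
  also have "\<dots> \<ge> (\<Sum>j<n. y j * (pmf \<pi> j / real (n choose j))) + y n * c"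
    using c yn by (simp add: mult_left_mono)
  finally show ?thesis using L2 by linarith
qed


definition clamp :: "real \<Rightarrow> real" where "clamp x = max 0 (min 1 x)"
definition cg :: "nat \<Rightarrow> nat \<Rightarrow> real \<Rightarrow> real" where "cg n j x = clamp x ^ j * (1 - clamp x)^(n-j)"

lemma clamp01: "0 \<le> clamp x" "clamp x \<le> 1" unfolding clamp_def by auto
lemma clamp_id: "0 \<le> x \<Longrightarrow> x \<le> 1 \<Longrightarrow> clamp x = x" unfolding clamp_def by auto

lemma cg_nonneg: "0 \<le> cg n j x" unfolding cg_def using clamp01[of x] by simp
lemma cg_le1: "cg n j x \<le> 1" unfolding cg_def using clamp01[of x]
  by (intro mult_le_one power_le_one) auto
lemma cg_meas[measurable]: "cg n j \<in> borel_measurable borel"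
  unfolding cg_def clamp_def by measurable
lemma clamp_meas[measurable]: "clamp \<in> borel_measurable borel"
  unfolding clamp_def by measurable
lemma cg_cont: "isCont (cg n j) x"
  unfolding cg_def clamp_def by (intro continuous_intros)
lemma cg_id: "0 \<le> x \<Longrightarrow> x \<le> 1 \<Longrightarrow> cg n j x = x^j * (1-x)^(n-j)"
  unfolding cg_def by (simp add: clamp_id)

definition Kset :: "real measure set" where
  "Kset = {L. real_distribution L \<and> emeasure L {0..1} = 1}"

lemma KsetD:
  assumes "L \<in> Kset" shows "prob_space L" "sets L = sets borel" "emeasure L {0..1} = 1"
  using assms unfolding Kset_def real_distribution_def real_distribution_axioms_def by auto

lemma integrable_cg: "L \<in> Kset \<Longrightarrow> integrable L (cg n j)"
proof -
  assume L: "L \<in> Kset"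
  interpret prob_space L using KsetD[OF L] by simp
  show ?thesis
    by (rule integrable_const_bound[where B=1])
       (auto simp: cg_nonneg cg_le1 intro!: meas_L[OF KsetD(2)[OF L]])
qed

lemma cg_integral_eq:
  assumes "L \<in> Kset"
  shows "(\<integral>x. cg n j x \<partial>L) = (\<integral>x. x^j * (1-x)^(n-j) \<partial>L)"
proof (rule integral_cong_AE)
  note K = KsetD[OF assms]
  show "cg n j \<in> borel_measurable L" by (rule meas_L[OF K(2)]) simp
  show "(\<lambda>x::real. x^j * (1-x)^(n-j)) \<in> borel_measurable L" by (rule meas_L[OF K(2)]) simp
  show "AE x in L. cg n j x = x^j * (1-x)^(n-j)"
    using AE01[OF K] by (rule eventually_mono) (simp add: cg_id)
qed

definition Mix :: "real \<Rightarrow> real \<Rightarrow> real measure \<Rightarrow> real measure" where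
  "Mix s a L = measure_pmf (bernoulli_pmf s) \<bind> (\<lambda>b. if b then return borel a else L)"

lemma Mix_props:
  assumes L: "L \<in> Kset" and a: "0 \<le> a" "a \<le> 1" and s: "0 \<le> s" "s \<le> 1"
  shows "Mix s a L \<in> Kset"
    and "\<And>g. g \<in> borel_measurable borel \<Longrightarrow> (\<And>x. 0 \<le> g x) \<Longrightarrow> (\<And>x. g x \<le> 1) \<Longrightarrow>
          (\<integral>x. g x \<partial>Mix s a L) = s * g a + (1 - s) * (\<integral>x. g x \<partial>L)"
proof -
  note K = KsetD[OF L]
  define f where "f = (\<lambda>b. if b then return borel a else L)"
  have fsp: "f b \<in> space (prob_algebra borel)" for b
    using K by (auto simp: f_def space_prob_algebra prob_space_return)
  have fsp': "f b \<in> space (subprob_algebra borel)" for b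
    using K by (auto simp: f_def space_subprob_algebra prob_space_return prob_space_imp_subprob_space)
  have fm: "f \<in> measurable (measure_pmf (bernoulli_pmf s)) (prob_algebra borel)"
    using fsp by simp
  have fm': "f \<in> measurable (measure_pmf (bernoulli_pmf s)) (subprob_algebra borel)"
    using fsp' by simp
  have A: "measure_pmf (bernoulli_pmf s) \<in> space (prob_algebra (measure_pmf (bernoulli_pmf s)))"
    by (simp add: space_prob_algebra prob_space_measure_pmf)
  have M: "Mix s a L = measure_pmf (bernoulli_pmf s) \<bind> f" unfolding Mix_def f_def ..
  have ps: "prob_space (Mix s a L)" unfolding M by (rule prob_space_bind'[OF A]) (use fm in simp)
  have sets: "sets (Mix s a L) = sets borel" unfolding M by (rule sets_bind'[OF A]) (use fm in simp)
  have "emeasure (Mix s a L) {0..1} = (\<integral>\<^sup>+b. emeasure (f b) {0..1} \<partial>measure_pmf (bernoulli_pmf s))"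
    unfolding M by (rule emeasure_bind[OF _ fm']) auto
  also have "\<dots> = 1"
    using s a K by (simp add: f_def ennreal_plus[symmetric] del: ennreal_plus)
  finally have e1: "emeasure (Mix s a L) {0..1} = 1" .
  show "Mix s a L \<in> Kset" unfolding Kset_def real_distribution_def real_distribution_axioms_def
    using ps sets e1 by simp
  fix g :: "real \<Rightarrow> real"
  assume g: "g \<in> borel_measurable borel" "\<And>x. 0 \<le> g x" "\<And>x. g x \<le> 1"
  have gL: "integrable L g"
  proof -
    interpret prob_space L using K by simp
    show ?thesis by (rule integrable_const_bound[where B=1]) (use g in \<open>auto intro!: meas_L[OF K(2)]\<close>)
  qed
  have "(\<integral>\<^sup>+x. ennreal (g x) \<partial>Mix s a L) = (\<integral>\<^sup>+b. (\<integral>\<^sup>+x. ennreal (g x) \<partial>f b) \<partial>measure_pmf (bernoulli_pmf s))"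
    unfolding M by (rule nn_integral_bind[OF _ fm']) (use g in simp)
  also have "\<dots> = ennreal (g a) * s + (\<integral>\<^sup>+x. ennreal (g x) \<partial>L) * (1 - s)"
    using s g by (simp add: f_def nn_integral_return)
  also have "(\<integral>\<^sup>+x. ennreal (g x) \<partial>L) = ennreal (\<integral>x. g x \<partial>L)"
    by (rule nn_integral_eq_integral[OF gL]) (use g in simp)
  also have "ennreal (g a) * s + ennreal (\<integral>x. g x \<partial>L) * (1 - s) = ennreal (s * g a + (1 - s) * (\<integral>x. g x \<partial>L))"
    using s g integral_nonneg_AE[of g L]
    by (simp add: ennreal_mult'[symmetric] ennreal_plus[symmetric] mult.commute del: ennreal_plus)
  finally have nn: "(\<integral>\<^sup>+x. ennreal (g x) \<partial>Mix s a L) = ennreal (s * g a + (1 - s) * (\<integral>x. g x \<partial>L))" .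
  have "(\<integral>x. g x \<partial>Mix s a L) = enn2real (\<integral>\<^sup>+x. ennreal (g x) \<partial>Mix s a L)"
    by (rule integral_eq_nn_integral) (use g sets in \<open>auto intro: meas_L\<close>)
  also have "\<dots> = s * g a + (1 - s) * (\<integral>x. g x \<partial>L)"
  proof -
    have "0 \<le> (\<integral>x. g x \<partial>L)" by (intro integral_nonneg_AE AE_I2) (use g in auto)
    then have "0 \<le> s * g a + (1 - s) * (\<integral>x. g x \<partial>L)" using s g by simp
    then show ?thesis unfolding nn by (rule enn2real_ennreal)
  qed
  finally show "(\<integral>x. g x \<partial>Mix s a L) = s * g a + (1 - s) * (\<integral>x. g x \<partial>L)" .
qed

lemma clamp_clamp: "clamp (clamp x) = clamp x" unfolding clamp_def by auto

lemma helly_K: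
  fixes L :: "nat \<Rightarrow> real measure"
  assumes L: "\<And>i. L i \<in> Kset"
  shows "\<exists>r \<Lambda>. strict_mono r \<and> \<Lambda> \<in> Kset \<and>
           (\<forall>m j. (\<lambda>i. \<integral>x. cg m j x \<partial>L (r i)) \<longlonglongrightarrow> (\<integral>x. cg m j x \<partial>\<Lambda>))"
proof -
  have rd: "real_distribution (L i)" for i using L[of i] by (simp add: Kset_def)
  have "tight L" unfolding tight_def
  proof (intro conjI allI impI)
    show "real_distribution (L i)" for i by (rule rd)
    fix \<epsilon> :: real assume "\<epsilon> > 0"
    have "measure (L i) {-1<..2::real} > 1 - \<epsilon>" for i
    proof -
      interpret real_distribution "L i" by (rule rd)
      have "measure (L i) {0..1} = 1" using KsetD(3)[OF L[of i]] by (simp add: emeasure_eq_measure)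
      moreover have "measure (L i) {0..1} \<le> measure (L i) {-1<..2}"
        by (intro finite_measure_mono) auto
      ultimately show ?thesis using \<open>\<epsilon> > 0\<close> by linarith
    qed
    then show "\<exists>a b. a < b \<and> (\<forall>i. measure (L i) {a<..b} > 1 - \<epsilon>)"
      by (intro exI[of _ "-1::real"] exI[of _ "2::real"]) auto
  qed
  from tight_imp_convergent_subsubsequence[OF this strict_mono_id]
  obtain r M where r: "strict_mono r" and M: "real_distribution M" and wc: "weak_conv_m (L \<circ> id \<circ> r) M"
    by blast
  interpret M: real_distribution M by (rule M)
  define \<Lambda> where "\<Lambda> = distr M borel clamp"
  have cm: "clamp \<in> measurable M borel" by (simp add: measurable_cong_sets[OF M.events_eq_borel refl])
  have psL: "prob_space \<Lambda>" unfolding \<Lambda>_def by (rule M.prob_space_distr[OF cm])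
  have setsL: "sets \<Lambda> = sets borel" unfolding \<Lambda>_def by simp
  have "emeasure \<Lambda> {0..1} = emeasure M (clamp -` {0..1} \<inter> space M)"
    unfolding \<Lambda>_def by (rule emeasure_distr[OF cm]) simp
  also have "clamp -` {0..1} \<inter> space M = space M" using clamp01 by auto
  also have "emeasure M (space M) = 1" by (rule M.emeasure_space_1)
  finally have e1: "emeasure \<Lambda> {0..1} = 1" .
  have K: "\<Lambda> \<in> Kset" unfolding Kset_def real_distribution_def real_distribution_axioms_def
    using psL setsL e1 by simp
  have conv: "(\<lambda>i. \<integral>x. cg m j x \<partial>L (r i)) \<longlonglongrightarrow> (\<integral>x. cg m j x \<partial>\<Lambda>)" for m j
  proof -
    have "(\<lambda>i. \<integral>x. cg m j x \<partial>(L \<circ> id \<circ> r) i) \<longlonglongrightarrow> (\<integral>x. cg m j x \<partial>M)"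
    proof (rule weak_conv_imp_integral_bdd_continuous_conv[where B=1])
      show "real_distribution ((L \<circ> id \<circ> r) i)" for i using rd by simp
      show "real_distribution M" by (rule M)
      show "weak_conv_m (L \<circ> id \<circ> r) M" by (rule wc)
      show "isCont (cg m j) x" for x by (rule cg_cont)
      show "norm (cg m j x) \<le> 1" for x using cg_nonneg cg_le1 by simp
    qed
    moreover have "(\<integral>x. cg m j x \<partial>\<Lambda>) = (\<integral>x. cg m j x \<partial>M)"
    proof -
      have "(\<integral>x. cg m j x \<partial>\<Lambda>) = (\<integral>x. cg m j (clamp x) \<partial>M)"
        unfolding \<Lambda>_def by (rule integral_distr[OF cm]) simp
      also have "\<dots> = (\<integral>x. cg m j x \<partial>M)" by (simp add: cg_def clamp_clamp)
      finally show ?thesis .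
    qed
    ultimately show ?thesis by simp
  qed
  show ?thesis using r K conv by blast
qed


lemma binom_sum: "(\<Sum>j\<le>n. real (n choose j) * (\<alpha>^j * (1-\<alpha>)^(n-j))) = 1"
  using binomial_ring[of \<alpha> "1-\<alpha>" n] by (simp add: mult.assoc)

lemma return_K: "return borel (0::real) \<in> Kset"
  unfolding Kset_def real_distribution_def real_distribution_axioms_def
  by (simp add: prob_space_return)

lemma exists_rep:
  fixes b :: "nat \<Rightarrow> real"
  assumes pos: "\<And>y. (\<And>\<alpha>. 0 \<le> \<alpha> \<Longrightarrow> \<alpha> \<le> 1 \<Longrightarrow> (\<Sum>j\<le>n. y j * (\<alpha>^j*(1-\<alpha>)^(n-j))) \<ge> 0) \<Longrightarrow> (\<Sum>j\<le>n. y j * b j) \<ge> 0"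
    and sumb: "(\<Sum>j\<le>n. real (n choose j) * b j) = 1"
  shows "\<exists>\<Lambda>\<in>Kset. \<forall>j\<le>n. (\<integral>x. cg n j x \<partial>\<Lambda>) = b j"
proof -
  define mv where "mv L j = (\<integral>x. cg n j x \<partial>L)" for L j
  define Dd where "Dd L = (\<Sum>j\<le>n. (mv L j - b j)^2)" for L
  define \<delta> where "\<delta> = Inf (Dd ` Kset)"
  have ne: "Dd ` Kset \<noteq> {}" using return_K by blast
  have bdd: "bdd_below (Dd ` Kset)" by (rule bdd_belowI[of _ 0]) (auto simp: Dd_def intro: sum_nonneg)
  have lower: "\<delta> \<le> Dd L" if "L \<in> Kset" for L
    unfolding \<delta>_def using that bdd by (intro cInf_lower) auto
  have "\<forall>i. \<exists>L. L \<in> Kset \<and> Dd L < \<delta> + inverse (real (Suc i))"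
  proof
    fix i
    have "Inf (Dd ` Kset) < \<delta> + inverse (real (Suc i))" by (simp add: \<delta>_def)
    from cInf_lessD[OF ne this] show "\<exists>L. L \<in> Kset \<and> Dd L < \<delta> + inverse (real (Suc i))" by blast
  qed
  then obtain Ls where Ls: "\<And>i. Ls i \<in> Kset" "\<And>i. Dd (Ls i) < \<delta> + inverse (real (Suc i))"
    by metis
  obtain r \<Lambda> where r: "strict_mono r" and K: "\<Lambda> \<in> Kset"
    and conv: "\<And>m j. (\<lambda>i. \<integral>x. cg m j x \<partial>Ls (r i)) \<longlonglongrightarrow> (\<integral>x. cg m j x \<partial>\<Lambda>)"
  proof -
    have "\<exists>r \<Lambda>. strict_mono r \<and> \<Lambda> \<in> Kset \<and>
           (\<forall>m j. (\<lambda>i. \<integral>x. cg m j x \<partial>Ls (r i)) \<longlonglongrightarrow> (\<integral>x. cg m j x \<partial>\<Lambda>))"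
      by (rule helly_K) (rule Ls(1))
    then show ?thesis using that by blast
  qed
  have convD: "(\<lambda>i. Dd (Ls (r i))) \<longlonglongrightarrow> Dd \<Lambda>"
    unfolding Dd_def mv_def by (intro tendsto_intros conv)
  have "Dd \<Lambda> \<le> \<delta>"
  proof (rule LIMSEQ_le[OF convD])
    show "(\<lambda>i. \<delta> + inverse (real (Suc i))) \<longlonglongrightarrow> \<delta>"
      using tendsto_add[OF tendsto_const LIMSEQ_inverse_real_of_nat, of \<delta>] by simp
    show "\<exists>N. \<forall>i\<ge>N. Dd (Ls (r i)) \<le> \<delta> + inverse (real (Suc i))"
    proof (intro exI allI impI)
      fix i :: nat
      have "i \<le> r i" using seq_suble[OF r] by simp
      then have "inverse (real (Suc (r i))) \<le> inverse (real (Suc i))"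
        by (intro le_imp_inverse_le) auto
      then show "Dd (Ls (r i)) \<le> \<delta> + inverse (real (Suc i))" using Ls(2)[of "r i"] by linarith
    qed
  qed
  with lower[OF K] have D\<Lambda>: "Dd \<Lambda> = \<delta>" by simp
  show ?thesis
  proof (cases "\<delta> = 0")
    case True
    have "\<forall>j\<in>{..n}. (mv \<Lambda> j - b j)^2 = 0"
      using D\<Lambda> True unfolding Dd_def by (subst sum_nonneg_eq_0_iff[symmetric]) auto
    then show ?thesis using K unfolding mv_def by auto
  next
    case False
    have "Dd \<Lambda> \<ge> 0" unfolding Dd_def by (intro sum_nonneg) auto
    then have \<delta>pos: "\<delta> > 0" using False D\<Lambda> by simp
    define q where "q = mv \<Lambda>"
    define y where "y j = q j - b j" for j
    define \<gamma> where "\<gamma> j \<alpha> = \<alpha>^j * (1-\<alpha>)^(n-j)" for j and \<alpha> :: real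
    have Ay: "(\<Sum>j\<le>n. y j * (\<gamma> j \<alpha> - q j)) \<ge> 0" if a: "0 \<le> \<alpha>" "\<alpha> \<le> 1" for \<alpha>
    proof (rule ccontr)
      define A where "A = (\<Sum>j\<le>n. y j * (\<gamma> j \<alpha> - q j))"
      define B where "B = (\<Sum>j\<le>n. (\<gamma> j \<alpha> - q j)^2)"
      assume "\<not> (\<Sum>j\<le>n. y j * (\<gamma> j \<alpha> - q j)) \<ge> 0"
      then have Aneg: "A < 0" unfolding A_def by simp
      have B0: "B \<ge> 0" unfolding B_def by (intro sum_nonneg) auto
      have key: "2 * A + s * B \<ge> 0" if s: "0 < s" "s \<le> 1" for s
      proof -
        have MK: "Mix s \<alpha> \<Lambda> \<in> Kset" using Mix_props(1)[OF K a] s by simp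
        have mvM: "mv (Mix s \<alpha> \<Lambda>) j = s * \<gamma> j \<alpha> + (1 - s) * q j" for j
          unfolding mv_def q_def using Mix_props(2)[OF K a, of s "cg n j"] s a
          by (simp add: cg_nonneg cg_le1 cg_id \<gamma>_def)
        have "Dd (Mix s \<alpha> \<Lambda>) = (\<Sum>j\<le>n. (y j + s * (\<gamma> j \<alpha> - q j))^2)"
          unfolding Dd_def mvM y_def by (intro sum.cong refl) (simp add: algebra_simps)
        also have "\<dots> = (\<Sum>j\<le>n. (y j)^2 + s * (2 * (y j * (\<gamma> j \<alpha> - q j)) + s * (\<gamma> j \<alpha> - q j)^2))"
          by (intro sum.cong refl) (simp add: power2_eq_square algebra_simps)
        also have "\<dots> = (\<Sum>j\<le>n. (y j)^2) + s * (2 * A + s * B)"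
          unfolding A_def B_def by (simp only: sum.distrib sum_distrib_left[symmetric])
        also have "(\<Sum>j\<le>n. (y j)^2) = \<delta>" using D\<Lambda> unfolding Dd_def y_def q_def by simp
        finally have "Dd (Mix s \<alpha> \<Lambda>) = \<delta> + s * (2 * A + s * B)" .
        with lower[OF MK] have "s * (2 * A + s * B) \<ge> 0" by simp
        with s show ?thesis by (simp add: zero_le_mult_iff)
      qed
      define s where "s = min 1 (- A / (B + 1))"
      have "A / (B + 1) < 0" using Aneg B0 by (intro divide_neg_pos) auto
      then have s0: "0 < s" "s \<le> 1" by (auto simp: s_def)
      have "s * B \<le> (- A / (B + 1)) * B" using B0 by (intro mult_right_mono) (auto simp: s_def)
      also have "\<dots> < - A"
      proof -
        have "(- A / (B + 1)) * B = - A * (B / (B + 1))" by simp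
        also have "\<dots> < - A * 1" using Aneg B0 by (intro mult_strict_left_mono) auto
        finally show ?thesis by simp
      qed
      finally have "2 * A + s * B < 0" using Aneg by linarith
      with key[OF s0] show False by simp
    qed
    define Y where "Y = (\<Sum>j\<le>n. y j * q j)"
    define y' where "y' j = y j - Y * real (n choose j)" for j
    have "(\<Sum>j\<le>n. y' j * b j) \<ge> 0"
    proof (rule pos)
      fix \<alpha> :: real assume a: "0 \<le> \<alpha>" "\<alpha> \<le> 1"
      have "(\<Sum>j\<le>n. y' j * (\<alpha>^j*(1-\<alpha>)^(n-j))) =
            (\<Sum>j\<le>n. y j * \<gamma> j \<alpha>) - Y * (\<Sum>j\<le>n. real (n choose j) * (\<alpha>^j * (1-\<alpha>)^(n-j)))"
        unfolding y'_def \<gamma>_def by (simp add: algebra_simps sum_subtractf sum_distrib_left)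
      also have "\<dots> = (\<Sum>j\<le>n. y j * (\<gamma> j \<alpha> - q j))"
        unfolding binom_sum Y_def by (simp add: algebra_simps sum_subtractf)
      also have "\<dots> \<ge> 0" by (rule Ay[OF a])
      finally show "(\<Sum>j\<le>n. y' j * (\<alpha>^j*(1-\<alpha>)^(n-j))) \<ge> 0" .
    qed
    moreover have "(\<Sum>j\<le>n. y' j * b j) = - \<delta>"
    proof -
      have "(\<Sum>j\<le>n. y' j * b j) = (\<Sum>j\<le>n. y j * b j) - Y * (\<Sum>j\<le>n. real (n choose j) * b j)"
        unfolding y'_def by (simp add: algebra_simps sum_subtractf sum_distrib_left)
      also have "\<dots> = (\<Sum>j\<le>n. y j * b j) - Y" using sumb by simp
      also have "\<dots> = (\<Sum>j\<le>n. - (y j * y j))"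
        unfolding Y_def sum_subtractf[symmetric] by (intro sum.cong refl) (simp add: y_def power2_eq_square algebra_simps)
      also have "\<dots> = - (\<Sum>j\<le>n. (y j)^2)" by (simp add: sum_negf power2_eq_square)
      also have "(\<Sum>j\<le>n. (y j)^2) = \<delta>" using D\<Lambda> unfolding Dd_def y_def q_def by simp
      finally show ?thesis .
    qed
    ultimately show ?thesis using \<delta>pos by simp
  qed
qed


lemma bern_clamp: "bernoulli_pmf p = bernoulli_pmf (clamp p)"
  by (rule pmf_eqI) (simp add: bernoulli_pmf.rep_eq clamp_def)

lemma coord_clamp: "spike_slab_coord \<alpha> G = spike_slab_coord (clamp \<alpha>) G"
  unfolding spike_slab_coord_def by (subst bern_clamp) simp

locale Gassm =
  fixes G :: "real measure"
  assumes Gp: "prob_space G" and Gs: "sets G = sets borel"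
begin

definition fk :: "bool \<Rightarrow> real measure" where "fk b = (if b then G else return borel 0)"

lemma fk_sp: "fk b \<in> space (prob_algebra borel)"
  using Gp Gs by (auto simp: fk_def space_prob_algebra prob_space_return)

lemma fk_ssp: "fk b \<in> space (subprob_algebra borel)"
  using Gp Gs by (auto simp: fk_def space_subprob_algebra prob_space_return prob_space_imp_subprob_space)

lemma coord_eq: "spike_slab_coord \<alpha> G = measure_pmf (bernoulli_pmf \<alpha>) \<bind> fk"
  unfolding spike_slab_coord_def fk_def ..

lemma fk_meas: "fk \<in> measurable (measure_pmf p) (prob_algebra borel)"
  by (simp add: fk_sp)

lemma fk_meas': "fk \<in> measurable (measure_pmf p) (subprob_algebra borel)"
  by (simp add: fk_ssp)

lemma pmf_in_pa: "measure_pmf p \<in> space (prob_algebra (measure_pmf p))"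
  by (simp add: space_prob_algebra prob_space_measure_pmf)

lemma coord_prob: "prob_space (spike_slab_coord \<alpha> G)"
  unfolding coord_eq by (rule prob_space_bind'[OF pmf_in_pa fk_meas])

lemma coord_sets: "sets (spike_slab_coord \<alpha> G) = sets borel"
  unfolding coord_eq by (rule sets_bind'[OF pmf_in_pa fk_meas])

lemma coord_emeasure:
  assumes a: "0 \<le> \<alpha>" "\<alpha> \<le> 1" and B: "B \<in> sets borel"
  shows "emeasure (spike_slab_coord \<alpha> G) B = ennreal (\<alpha> * measure G B + (1 - \<alpha>) * indicator B 0)"
proof -
  interpret G: prob_space G by (rule Gp)
  have "emeasure (spike_slab_coord \<alpha> G) B = (\<integral>\<^sup>+b. emeasure (fk b) B \<partial>measure_pmf (bernoulli_pmf \<alpha>))"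
    unfolding coord_eq by (rule emeasure_bind[OF _ fk_meas' B]) simp
  also have "\<dots> = emeasure G B * \<alpha> + emeasure (return borel 0) B * (1 - \<alpha>)"
    using a by (simp add: fk_def)
  also have "\<dots> = ennreal (\<alpha> * measure G B + (1 - \<alpha>) * indicator B 0)"
    using a B Gs
    by (simp add: G.emeasure_eq_measure ennreal_mult'[symmetric] ennreal_plus[symmetric] mult.commute
                  del: ennreal_plus split: split_indicator)
  finally show ?thesis .
qed

definition Fbox :: "nat \<Rightarrow> (nat \<Rightarrow> real set) \<Rightarrow> real \<Rightarrow> real" where
  "Fbox n A \<alpha> = (\<Prod>i\<in>{..<n}. \<alpha> * measure G (A i) + (1 - \<alpha>) * indicator (A i) (0::real))"

lemma kernel_box:
  assumes a: "0 \<le> \<alpha>" "\<alpha> \<le> 1" and A: "\<And>i. i \<in> {..<n} \<Longrightarrow> A i \<in> sets borel"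
  shows "emeasure (PiM {..<n} (\<lambda>_. spike_slab_coord \<alpha> G)) (PiE {..<n} A) = ennreal (Fbox n A \<alpha>)"
proof -
  interpret P: product_prob_space "\<lambda>_. spike_slab_coord \<alpha> G"
    by (rule product_prob_spaceI) (rule coord_prob)
  have "emeasure (PiM {..<n} (\<lambda>_. spike_slab_coord \<alpha> G)) (PiE {..<n} A) =
        (\<Prod>i\<in>{..<n}. emeasure (spike_slab_coord \<alpha> G) (A i))"
    using A by (intro P.emeasure_PiM) (auto simp: coord_sets)
  also have "\<dots> = (\<Prod>i\<in>{..<n}. ennreal (\<alpha> * measure G (A i) + (1 - \<alpha>) * indicator (A i) (0::real)))"
    using A a by (intro prod.cong refl coord_emeasure) auto
  also have "\<dots> = ennreal (Fbox n A \<alpha>)"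
    unfolding Fbox_def using a by (intro prod_ennreal) (auto simp: measure_nonneg)
  finally show ?thesis .
qed

lemma Fbox_meas[measurable]: "Fbox (n::nat) A \<in> borel_measurable borel"
  unfolding Fbox_def by measurable

lemma kernel_meas:
  fixes n :: nat
  assumes "sets L = sets (borel :: real measure)"
  shows "(\<lambda>\<alpha>. PiM {..<n} (\<lambda>_. spike_slab_coord \<alpha> G)) \<in> measurable L (subprob_algebra (PiM {..<n} (\<lambda>_. borel)))"
proof -
  have "(\<lambda>\<alpha>. PiM {..<n} (\<lambda>_. spike_slab_coord \<alpha> G)) \<in> measurable borel (subprob_algebra (PiM {..<n} (\<lambda>_. borel)))"
  proof (rule measurable_subprob_algebra_generated[where \<Omega>="PiE {..<n} (\<lambda>_. UNIV)" and G="prod_algebra {..<n} (\<lambda>_. borel)"])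
    show "sets (PiM {..<n} (\<lambda>_. borel)) = sigma_sets (PiE {..<n} (\<lambda>_. UNIV)) (prod_algebra {..<n} (\<lambda>_. borel))"
      by (simp add: sets_PiM)
    show "Int_stable (prod_algebra {..<n} (\<lambda>_. borel))" by (rule Int_stable_prod_algebra)
    show "prod_algebra {..<n} (\<lambda>_. borel) \<subseteq> Pow (PiE {..<n} (\<lambda>_. UNIV))"
      using prod_algebra_sets_into_space[of "{..<n}" "\<lambda>_. borel"] by simp
    show "subprob_space (PiM {..<n} (\<lambda>_. spike_slab_coord a G))" for a
      using prob_space_PiM[of "{..<n}" "\<lambda>_. spike_slab_coord a G"] coord_prob
      by (simp add: prob_space_imp_subprob_space)
    show "sets (PiM {..<n} (\<lambda>_. spike_slab_coord a G)) = sets (PiM {..<n} (\<lambda>_. borel))" for a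
      by (rule sets_PiM_cong) (auto simp: coord_sets)
    have box: "(\<lambda>a. emeasure (PiM {..<n} (\<lambda>_. spike_slab_coord a G)) (PiE {..<n} E)) \<in> borel_measurable borel"
      if E: "\<And>i. i \<in> {..<n} \<Longrightarrow> E i \<in> sets borel" for E
    proof -
      have "emeasure (PiM {..<n} (\<lambda>_. spike_slab_coord a G)) (PiE {..<n} E) = ennreal (Fbox n E (clamp a))" for a
        using kernel_box[of "clamp a" n E] clamp01[of a] E by (subst coord_clamp) simp
      then show ?thesis by simp
    qed
    show "(\<lambda>a. emeasure (PiM {..<n} (\<lambda>_. spike_slab_coord a G)) A) \<in> borel_measurable borel"
      if "A \<in> prod_algebra {..<n} (\<lambda>_. borel)" for A
      using that by (elim prod_algebraE_all) (use box in auto)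
    show "(\<lambda>a. emeasure (PiM {..<n} (\<lambda>_. spike_slab_coord a G)) (PiE {..<n} (\<lambda>_. UNIV))) \<in> borel_measurable borel"
      by (rule box) simp
  qed
  then show ?thesis by (simp add: measurable_cong_sets[OF assms refl])
qed

definition wt :: "nat \<Rightarrow> nat set \<Rightarrow> (nat \<Rightarrow> real set) \<Rightarrow> real" where
  "wt n S A = (\<Prod>i\<in>S. measure G (A i)) * (\<Prod>i\<in>{..<n} - S. indicator (A i) (0::real))"

lemma Fbox_expand:
  "Fbox n A \<alpha> = (\<Sum>S\<in>Pow {..<n}. \<alpha>^card S * (1-\<alpha>)^(n - card S) * wt n S A)"
proof -
  have "Fbox n A \<alpha> = (\<Sum>S\<in>Pow {..<n}. (\<Prod>i\<in>S. \<alpha> * measure G (A i)) *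
      (\<Prod>i\<in>{..<n} - S. (1 - \<alpha>) * indicator (A i) (0::real)))"
    unfolding Fbox_def by (rule prod_add) simp
  also have "\<dots> = (\<Sum>S\<in>Pow {..<n}. \<alpha>^card S * (1-\<alpha>)^(n - card S) * wt n S A)"
  proof (intro sum.cong refl)
    fix S assume "S \<in> Pow {..<n}"
    then have S: "S \<subseteq> {..<n}" by simp
    then have fS: "finite S" using finite_subset by blast
    have c: "card ({..<n} - S) = n - card S" using S fS by (simp add: card_Diff_subset)
    show "(\<Prod>i\<in>S. \<alpha> * measure G (A i)) * (\<Prod>i\<in>{..<n} - S. (1 - \<alpha>) * indicator (A i) (0::real)) =
        \<alpha>^card S * (1-\<alpha>)^(n - card S) * wt n S A"
      unfolding wt_def prod.distrib c[symmetric] by (simp add: mult_ac)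
  qed
  finally show ?thesis .
qed

lemma Fbox_bounds:
  assumes "0 \<le> \<alpha>" "\<alpha> \<le> 1"
  shows "0 \<le> Fbox n A \<alpha>" "Fbox n A \<alpha> \<le> 1"
proof -
  interpret G: prob_space G by (rule Gp)
  have f: "0 \<le> \<alpha> * measure G (A i) + (1 - \<alpha>) * indicator (A i) (0::real) \<and>
           \<alpha> * measure G (A i) + (1 - \<alpha>) * indicator (A i) (0::real) \<le> 1" for i
  proof -
    have m: "0 \<le> measure G (A i)" "measure G (A i) \<le> 1" by (auto simp: G.prob_le_1)
    have ind: "(0::real) \<le> indicator (A i) (0::real)" "indicator (A i) (0::real) \<le> (1::real)"
      by (auto simp: indicator_def)
    have "\<alpha> * measure G (A i) \<le> \<alpha> * 1" using m assms by (intro mult_left_mono) auto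
    moreover have "(1 - \<alpha>) * indicator (A i) (0::real) \<le> (1 - \<alpha>) * 1" using ind assms by (intro mult_left_mono) auto
    ultimately show ?thesis using m ind assms by simp
  qed
  show "0 \<le> Fbox n A \<alpha>" unfolding Fbox_def using f by (intro prod_nonneg) auto
  show "Fbox n A \<alpha> \<le> 1" unfolding Fbox_def using f by (intro prod_le_1) auto
qed

lemma ss_box:
  fixes n :: nat
  assumes L: "prob_space L" "sets L = sets borel" "emeasure L {0..1} = 1"
    and A: "\<And>i. i \<in> {..<n} \<Longrightarrow> A i \<in> sets borel"
  shows "emeasure (spike_slab_prior n L G) (PiE {..<n} A) =
    ennreal (\<Sum>S\<in>Pow {..<n}. (\<integral>\<alpha>. \<alpha>^card S * (1-\<alpha>)^(n - card S) \<partial>L) * wt n S A)"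
proof -
  have sp: "space L \<noteq> {}" using sets_eq_imp_space_eq[OF L(2)] by simp
  have box: "PiE {..<n} A \<in> sets (PiM {..<n} (\<lambda>_. borel))"
    using A by (intro sets_PiM_I_finite) auto
  have "emeasure (spike_slab_prior n L G) (PiE {..<n} A) =
      (\<integral>\<^sup>+\<alpha>. emeasure (PiM {..<n} (\<lambda>_. spike_slab_coord \<alpha> G)) (PiE {..<n} A) \<partial>L)"
    unfolding spike_slab_prior_def by (rule emeasure_bind[OF sp kernel_meas[OF L(2)] box])
  also have "\<dots> = (\<integral>\<^sup>+\<alpha>. ennreal (Fbox n A \<alpha>) \<partial>L)"
  proof (rule nn_integral_cong_AE)
    show "AE \<alpha> in L. emeasure (PiM {..<n} (\<lambda>_. spike_slab_coord \<alpha> G)) (PiE {..<n} A) = ennreal (Fbox n A \<alpha>)"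
      using AE01[OF L]
    proof (rule eventually_mono)
      fix x :: real assume "0 \<le> x \<and> x \<le> 1"
      then show "emeasure (PiM {..<n} (\<lambda>_. spike_slab_coord x G)) (PiE {..<n} A) = ennreal (Fbox n A x)"
        using kernel_box[of x n A] A by simp
    qed
  qed
  also have "\<dots> = ennreal (\<integral>\<alpha>. Fbox n A \<alpha> \<partial>L)"
  proof (rule nn_integral_eq_integral)
    show "integrable L (Fbox n A)"
      by (rule integrable_bounded01[OF L, where B=1]) (use Fbox_bounds in auto)
    show "AE x in L. 0 \<le> Fbox n A x"
      using AE01[OF L] by (rule eventually_mono) (simp add: Fbox_bounds)
  qed
  also have "(\<integral>\<alpha>. Fbox n A \<alpha> \<partial>L) =
      (\<integral>\<alpha>. (\<Sum>S\<in>Pow {..<n}. \<alpha>^card S * (1-\<alpha>)^(n - card S) * wt n S A) \<partial>L)"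
    by (simp add: Fbox_expand)
  also have "\<dots> = (\<Sum>S\<in>Pow {..<n}. (\<integral>\<alpha>. \<alpha>^card S * (1-\<alpha>)^(n - card S) \<partial>L) * wt n S A)"
  proof -
    define f where "f S \<alpha> = \<alpha>^card S * (1-\<alpha>)^(n - card S) * wt n S A" for S and \<alpha> :: real
    have int: "integrable L (f S)" for S
    proof -
      have "integrable L (\<lambda>\<alpha>::real. \<alpha>^card S * (1-\<alpha>)^(n - card S))"
        by (rule integrable_bounded01[OF L, where B=1]) (auto intro!: mult_le_one power_le_one)
      then show ?thesis unfolding f_def by simp
    qed
    have "(\<integral>\<alpha>. (\<Sum>S\<in>Pow {..<n}. f S \<alpha>) \<partial>L) = (\<Sum>S\<in>Pow {..<n}. (\<integral>\<alpha>. f S \<alpha> \<partial>L))"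
      by (rule Bochner_Integration.integral_sum) (rule int)
    then show ?thesis unfolding f_def by simp
  qed
  finally show ?thesis .
qed

lemma emb_meas: "embed_support n S \<in> measurable (PiM S (\<lambda>_. G)) (PiM {..<n} (\<lambda>_. borel))"
  unfolding embed_support_def
proof (rule measurable_restrict)
  fix i assume "i \<in> {..<n}"
  show "(\<lambda>x. if i \<in> S then x i else 0) \<in> measurable (PiM S (\<lambda>_. G)) borel"
  proof (cases "i \<in> S")
    case True
    have "(\<lambda>x. x i) \<in> measurable (PiM S (\<lambda>_. G)) G" by (rule measurable_component_singleton[OF True])
    then show ?thesis using True by (simp add: measurable_cong_sets[OF refl Gs])
  qed simp
qed

definition K3 :: "nat \<Rightarrow> nat set \<Rightarrow> (nat \<Rightarrow> real) measure" where
  "K3 n S = distr (PiM S (\<lambda>_. G)) (PiM {..<n} (\<lambda>_. borel)) (embed_support n S)"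

definition K2 :: "nat \<Rightarrow> nat \<Rightarrow> (nat \<Rightarrow> real) measure" where
  "K2 n s = measure_pmf (pmf_of_set {S. S \<subseteq> {..<n} \<and> card S = s}) \<bind> K3 n"

lemma MS_eq: "model_selection_prior n \<pi> G = measure_pmf \<pi> \<bind> K2 n"
  unfolding model_selection_prior_def K2_def K3_def ..

lemma K3_sp: "K3 n S \<in> space (prob_algebra (PiM {..<n} (\<lambda>_. borel)))"
proof -
  have "prob_space (PiM S (\<lambda>_. G))" by (rule prob_space_PiM) (rule Gp)
  then have "prob_space (K3 n S)" unfolding K3_def by (rule prob_space.prob_space_distr) (rule emb_meas)
  then show ?thesis by (simp add: space_prob_algebra K3_def)
qed

lemma K3_meas: "K3 n \<in> measurable (measure_pmf p) (prob_algebra (PiM {..<n} (\<lambda>_. borel)))"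
  by (simp add: K3_sp)

lemma K3_meas': "K3 n \<in> measurable (measure_pmf p) (subprob_algebra (PiM {..<n} (\<lambda>_. borel)))"
  using K3_sp by (simp add: space_prob_algebra space_subprob_algebra prob_space_imp_subprob_space)

lemma K2_sp: "K2 n s \<in> space (prob_algebra (PiM {..<n} (\<lambda>_. borel)))"
  unfolding space_prob_algebra K2_def
  using prob_space_bind'[OF pmf_in_pa K3_meas] sets_bind'[OF pmf_in_pa K3_meas] by simp

lemma K2_meas': "K2 n \<in> measurable (measure_pmf p) (subprob_algebra (PiM {..<n} (\<lambda>_. borel)))"
  using K2_sp by (simp add: space_prob_algebra space_subprob_algebra prob_space_imp_subprob_space)

lemma K2_meas: "K2 n \<in> measurable (measure_pmf p) (prob_algebra (PiM {..<n} (\<lambda>_. borel)))"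
  by (simp add: K2_sp)

lemma MS_prob: "prob_space (model_selection_prior n \<pi> G)"
  unfolding MS_eq by (rule prob_space_bind'[OF pmf_in_pa K2_meas])

lemma MS_sets: "sets (model_selection_prior n \<pi> G) = sets (PiM {..<n} (\<lambda>_. borel))"
  unfolding MS_eq by (rule sets_bind'[OF pmf_in_pa K2_meas])

lemma wt_nonneg: "0 \<le> wt n S A"
  unfolding wt_def by (intro mult_nonneg_nonneg prod_nonneg) (auto simp: indicator_def)

lemma K3_box:
  fixes n :: nat
  assumes S: "S \<subseteq> {..<n}" and A: "\<And>i. i \<in> {..<n} \<Longrightarrow> A i \<in> sets borel"
  shows "emeasure (K3 n S) (PiE {..<n} A) = ennreal (wt n S A)"
proof -
  have box: "PiE {..<n} A \<in> sets (PiM {..<n} (\<lambda>_. borel))"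
    using A by (intro sets_PiM_I_finite) auto
  have spG: "space G = UNIV" using sets_eq_imp_space_eq[OF Gs] by simp
  have fS: "finite S" using S finite_subset by blast
  have pre: "embed_support n S -` PiE {..<n} A \<inter> space (PiM S (\<lambda>_. G)) =
      (if (\<forall>i\<in>{..<n} - S. 0 \<in> A i) then PiE S A else {})"
    using S by (auto simp: space_PiM spG embed_support_def PiE_iff extensional_def split: if_splits)
  have "emeasure (K3 n S) (PiE {..<n} A) = emeasure (PiM S (\<lambda>_. G)) (embed_support n S -` PiE {..<n} A \<inter> space (PiM S (\<lambda>_. G)))"
    unfolding K3_def by (rule emeasure_distr[OF emb_meas box])
  also have "\<dots> = ennreal (wt n S A)"
  proof (cases "\<forall>i\<in>{..<n} - S. 0 \<in> A i")
    case True
    interpret GG: prob_space G by (rule Gp)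
    interpret P: product_prob_space "\<lambda>_. G" by (rule product_prob_spaceI) (rule Gp)
    have "emeasure (PiM S (\<lambda>_. G)) (PiE S A) = (\<Prod>i\<in>S. emeasure G (A i))"
      using A S fS Gs by (intro P.emeasure_PiM) auto
    also have "\<dots> = ennreal (\<Prod>i\<in>S. measure G (A i))"
      by (simp add: GG.emeasure_eq_measure prod_ennreal)
    also have "(\<Prod>i\<in>S. measure G (A i)) = wt n S A"
      unfolding wt_def using True by (simp add: indicator_def)
    finally show ?thesis unfolding pre using True by simp
  next
    case False
    then obtain i where i: "i \<in> {..<n} - S" "0 \<notin> A i" by blast
    then have "(\<Prod>i\<in>{..<n} - S. indicator (A i) (0::real)) = (0::real)"
      using i by (intro prod_zero) (auto intro!: bexI[of _ i])
    then have "wt n S A = 0" unfolding wt_def by simp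
    moreover have "(if (\<forall>i\<in>{..<n} - S. 0 \<in> A i) then PiE S A else {}) = {}" using False by auto
    ultimately show ?thesis unfolding pre by simp
  qed
  finally show ?thesis .
qed

lemma K2_box:
  fixes n :: nat
  assumes s: "s \<le> n" and A: "\<And>i. i \<in> {..<n} \<Longrightarrow> A i \<in> sets borel"
  shows "emeasure (K2 n s) (PiE {..<n} A) =
     ennreal ((\<Sum>S\<in>{S. S \<subseteq> {..<n} \<and> card S = s}. wt n S A) / real (n choose s))"
proof -
  define Ss where "Ss = {S. S \<subseteq> {..<n} \<and> card S = s}"
  have box: "PiE {..<n} A \<in> sets (PiM {..<n} (\<lambda>_. borel))"
    using A by (intro sets_PiM_I_finite) auto
  have fin: "finite Ss" unfolding Ss_def by (rule finite_subset[of _ "Pow {..<n}"]) auto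
  have "{..<s} \<in> Ss" using s by (auto simp: Ss_def)
  then have ne: "Ss \<noteq> {}" by auto
  have card: "card Ss = n choose s" unfolding Ss_def using n_subsets[of "{..<n}" s] by simp
  have "emeasure (K2 n s) (PiE {..<n} A) = (\<integral>\<^sup>+S. emeasure (K3 n S) (PiE {..<n} A) \<partial>measure_pmf (pmf_of_set Ss))"
    unfolding K2_def Ss_def[symmetric] by (rule emeasure_bind[OF _ K3_meas' box]) simp
  also have "\<dots> = (\<Sum>S\<in>Ss. emeasure (K3 n S) (PiE {..<n} A)) / card Ss"
    by (rule nn_integral_pmf_of_set[OF ne fin])
  also have "(\<Sum>S\<in>Ss. emeasure (K3 n S) (PiE {..<n} A)) = (\<Sum>S\<in>Ss. ennreal (wt n S A))"
    using A by (intro sum.cong refl K3_box) (auto simp: Ss_def)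
  also have "\<dots> = ennreal (\<Sum>S\<in>Ss. wt n S A)" by (rule sum_ennreal) (rule wt_nonneg)
  also have "ennreal (\<Sum>S\<in>Ss. wt n S A) / (of_nat (card Ss) :: ennreal) = ennreal ((\<Sum>S\<in>Ss. wt n S A) / real (n choose s))"
  proof -
    have "card Ss > 0" using fin ne by (simp add: card_gt_0_iff)
    then have "real (n choose s) > 0" using card by simp
    moreover have "(of_nat (card Ss) :: ennreal) = ennreal (real (n choose s))"
      using card by (simp add: ennreal_of_nat_eq_real_of_nat)
    ultimately show ?thesis
      by (simp add: divide_ennreal sum_nonneg wt_nonneg)
  qed
  finally show ?thesis unfolding Ss_def .
qed

lemma ms_box:
  fixes n :: nat
  assumes \<pi>: "set_pmf \<pi> \<subseteq> {..n}" and A: "\<And>i. i \<in> {..<n} \<Longrightarrow> A i \<in> sets borel"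
  shows "emeasure (model_selection_prior n \<pi> G) (PiE {..<n} A) =
    ennreal (\<Sum>S\<in>Pow {..<n}. pmf \<pi> (card S) / real (n choose card S) * wt n S A)"
proof -
  define X where "X s = (\<Sum>S\<in>{S. S \<subseteq> {..<n} \<and> card S = s}. wt n S A) / real (n choose s)" for s
  have X0: "0 \<le> X s" for s unfolding X_def by (intro divide_nonneg_nonneg sum_nonneg wt_nonneg) auto
  have box: "PiE {..<n} A \<in> sets (PiM {..<n} (\<lambda>_. borel))"
    using A by (intro sets_PiM_I_finite) auto
  have "emeasure (model_selection_prior n \<pi> G) (PiE {..<n} A) = (\<integral>\<^sup>+s. emeasure (K2 n s) (PiE {..<n} A) \<partial>measure_pmf \<pi>)"
    unfolding MS_eq by (rule emeasure_bind[OF _ K2_meas' box]) simp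
  also have "\<dots> = (\<Sum>s\<in>{..n}. emeasure (K2 n s) (PiE {..<n} A) * pmf \<pi> s)"
    by (rule nn_integral_measure_pmf_support) (use \<pi> in auto)
  also have "\<dots> = (\<Sum>s\<in>{..n}. ennreal (X s * pmf \<pi> s))"
  proof (intro sum.cong refl)
    fix s assume "s \<in> {..n}"
    then have "emeasure (K2 n s) (PiE {..<n} A) = ennreal (X s)" using K2_box[of s n A] A by (simp add: X_def)
    then show "emeasure (K2 n s) (PiE {..<n} A) * pmf \<pi> s = ennreal (X s * pmf \<pi> s)"
      by (simp add: ennreal_mult'' X0)
  qed
  also have "\<dots> = ennreal (\<Sum>s\<in>{..n}. X s * pmf \<pi> s)"
    by (rule sum_ennreal) (simp add: X0)
  also have "(\<Sum>s\<in>{..n}. X s * pmf \<pi> s) = (\<Sum>S\<in>Pow {..<n}. pmf \<pi> (card S) / real (n choose card S) * wt n S A)"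
  proof -
    have "(\<Sum>S\<in>Pow {..<n}. pmf \<pi> (card S) / real (n choose card S) * wt n S A) =
      (\<Sum>s\<in>{..n}. \<Sum>S\<in>{S \<in> Pow {..<n}. card S = s}. pmf \<pi> (card S) / real (n choose card S) * wt n S A)"
    proof (rule sum.group[symmetric])
      show "card ` Pow {..<n} \<subseteq> {..n}"
      proof
        fix x assume "x \<in> card ` Pow {..<n}"
        then obtain S where "S \<subseteq> {..<n}" "x = card S" by auto
        then have "x \<le> card {..<n}" using card_mono[of "{..<n}" S] by simp
        then show "x \<in> {..n}" by simp
      qed
    qed auto
    also have "\<dots> = (\<Sum>s\<in>{..n}. X s * pmf \<pi> s)"
    proof (intro sum.cong refl)
      fix s
      have e: "{S \<in> Pow {..<n}. card S = s} = {S. S \<subseteq> {..<n} \<and> card S = s}" by auto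
      show "(\<Sum>S\<in>{S \<in> Pow {..<n}. card S = s}. pmf \<pi> (card S) / real (n choose card S) * wt n S A) = X s * pmf \<pi> s"
        unfolding e X_def by (simp add: sum_divide_distrib sum_distrib_left mult_ac)
    qed
    finally show ?thesis by simp
  qed
  finally show ?thesis .
qed

lemma wt_single:
  fixes n :: nat
  assumes T: "T \<subseteq> {..<n}" and S: "S \<subseteq> {..<n}" and G0: "measure G {0} = 0"
  shows "wt n S (\<lambda>i. if i \<in> T then - {0} else {0}) = (if S = T then 1 else 0)"
proof -
  interpret GG: prob_space G by (rule Gp)
  have m1: "measure G (- {0}) = 1"
  proof -
    have "measure G (space G - {0}) = 1 - measure G {0}"
      using Gs by (subst GG.prob_compl) auto
    moreover have "space G = UNIV" using sets_eq_imp_space_eq[OF Gs] by simp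
    ultimately show ?thesis using G0 by (simp add: Compl_eq_Diff_UNIV)
  qed
  show ?thesis
  proof (cases "S = T")
    case True
    then show ?thesis unfolding wt_def using m1 by (simp add: indicator_def)
  next
    case False
    then consider i where "i \<in> S" "i \<notin> T" | i where "i \<in> T" "i \<notin> S" by blast
    then show ?thesis
    proof cases
      case 1
      have "(\<Prod>j\<in>S. measure G (if j \<in> T then - {0} else {0})) = 0"
        using 1 S G0 by (intro prod_zero) (auto intro!: bexI[of _ i] finite_subset[OF S])
      then show ?thesis unfolding wt_def using False by simp
    next
      case 2
      have "(\<Prod>j\<in>{..<n} - S. indicator (if j \<in> T then - {0} else {0}) (0::real)) = (0::real)"
        using 2 T by (intro prod_zero) (auto intro!: bexI[of _ i])
      then show ?thesis unfolding wt_def using False by simp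
    qed
  qed
qed

end


context Gassm
begin

lemma A_equiv:
  fixes n :: nat
  assumes \<pi>: "set_pmf \<pi> \<subseteq> {..n}" and G0: "measure G {0} = 0"
  shows "has_spike_slab_form n \<pi> G \<longleftrightarrow> (\<exists>L. BM n \<pi> L)"
proof
  assume "has_spike_slab_form n \<pi> G"
  then obtain L where L: "prob_space L" "sets L = sets borel" "emeasure L {0..1} = 1"
    and eq: "model_selection_prior n \<pi> G = spike_slab_prior n L G"
    unfolding has_spike_slab_form_def by blast
  have "(\<integral>\<alpha>. \<alpha>^j * (1-\<alpha>)^(n-j) \<partial>L) = pmf \<pi> j / real (n choose j)" if j: "j \<le> n" for j
  proof -
    define T where "T = {..<j}"
    define A where "A = (\<lambda>i. if i \<in> T then - {0::real} else {0})"
    have T: "T \<subseteq> {..<n}" "card T = j" using j by (auto simp: T_def)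
    have A: "A i \<in> sets borel" for i by (simp add: A_def)
    have TP: "T \<in> Pow {..<n}" using T by simp
    have fP: "finite (Pow {..<n::nat})" by simp
    have w: "wt n S A = (if S = T then 1 else 0)" if "S \<in> Pow {..<n}" for S
      unfolding A_def using wt_single[OF T(1) _ G0, of S] that by simp
    have s1: "(\<Sum>S\<in>Pow {..<n}. pmf \<pi> (card S) / real (n choose card S) * wt n S A) =
        (\<Sum>S\<in>Pow {..<n}. if S = T then pmf \<pi> (card T) / real (n choose card T) else 0)"
      by (intro sum.cong refl) (simp add: w)
    have s2: "(\<Sum>S\<in>Pow {..<n}. (\<integral>\<alpha>. \<alpha>^card S * (1-\<alpha>)^(n - card S) \<partial>L) * wt n S A) =
        (\<Sum>S\<in>Pow {..<n}. if S = T then (\<integral>\<alpha>. \<alpha>^card T * (1-\<alpha>)^(n - card T) \<partial>L) else 0)"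
      by (intro sum.cong refl) (simp add: w)
    have "emeasure (model_selection_prior n \<pi> G) (PiE {..<n} A) = ennreal (pmf \<pi> j / real (n choose j))"
      using ms_box[OF \<pi>, of A] A T unfolding s1 by (simp add: TP)
    moreover have "emeasure (spike_slab_prior n L G) (PiE {..<n} A) = ennreal (\<integral>\<alpha>. \<alpha>^j * (1-\<alpha>)^(n-j) \<partial>L)"
      using ss_box[OF L, of n A] A T unfolding s2 by (simp add: TP)
    ultimately have "ennreal (pmf \<pi> j / real (n choose j)) = ennreal (\<integral>\<alpha>. \<alpha>^j * (1-\<alpha>)^(n-j) \<partial>L)"
      using eq by simp
    moreover have "0 \<le> (\<integral>\<alpha>. \<alpha>^j * (1-\<alpha>)^(n-j) \<partial>L)"
    proof (rule integral_nonneg_AE)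
      show "AE \<alpha> in L. 0 \<le> \<alpha>^j * (1-\<alpha>)^(n-j)"
        using AE01[OF L] by (rule eventually_mono) simp
    qed
    ultimately show ?thesis by simp
  qed
  then show "\<exists>L. BM n \<pi> L" using L unfolding BM_def by blast
next
  assume "\<exists>L. BM n \<pi> L"
  then obtain L where BM: "BM n \<pi> L" by blast
  then have L: "prob_space L" "sets L = sets borel" "emeasure L {0..1} = 1" by (auto simp: BM_def)
  have spL: "space L \<noteq> {}" using sets_eq_imp_space_eq[OF L(2)] by simp
  have sSS: "sets (spike_slab_prior n L G) = sets (PiM {..<n} (\<lambda>_. borel))"
    unfolding spike_slab_prior_def
    by (rule sets_bind[OF _ spL]) (rule sets_PiM_cong, auto simp: coord_sets)
  have "has_spike_slab_form n \<pi> G" unfolding has_spike_slab_form_def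
  proof (intro exI conjI)
    show "prob_space L" "sets L = sets borel" "emeasure L {0..1} = 1" by (fact L)+
    show "model_selection_prior n \<pi> G = spike_slab_prior n L G"
    proof (rule measure_eqI_PiM_finite[where I="{..<n}" and M="\<lambda>_. borel" and A="\<lambda>_. PiE {..<n} (\<lambda>_. UNIV)"])
      show "finite {..<n}" by simp
      show "sets (model_selection_prior n \<pi> G) = sets (PiM {..<n} (\<lambda>_. borel))" by (rule MS_sets)
      show "sets (spike_slab_prior n L G) = sets (PiM {..<n} (\<lambda>_. borel))" by (rule sSS)
      fix A :: "nat \<Rightarrow> real set" assume A: "\<And>i. i \<in> {..<n} \<Longrightarrow> A i \<in> sets borel"
      have coef: "pmf \<pi> (card S) / real (n choose card S) = (\<integral>\<alpha>. \<alpha>^card S * (1-\<alpha>)^(n - card S) \<partial>L)"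
        if "S \<in> Pow {..<n}" for S
      proof -
        have "card S \<le> card {..<n}" using that by (intro card_mono) auto
        then show ?thesis using BM by (simp add: BM_def)
      qed
      show "emeasure (model_selection_prior n \<pi> G) (PiE {..<n} A) = emeasure (spike_slab_prior n L G) (PiE {..<n} A)"
      proof -
        have m: "emeasure (model_selection_prior n \<pi> G) (PiE {..<n} A) =
            ennreal (\<Sum>S\<in>Pow {..<n}. pmf \<pi> (card S) / real (n choose card S) * wt n S A)"
          by (rule ms_box[OF \<pi>]) (rule A)
        have s: "emeasure (spike_slab_prior n L G) (PiE {..<n} A) =
            ennreal (\<Sum>S\<in>Pow {..<n}. (\<integral>\<alpha>. \<alpha>^card S * (1-\<alpha>)^(n - card S) \<partial>L) * wt n S A)"
          by (rule ss_box[OF L]) (rule A)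
        have "(\<Sum>S\<in>Pow {..<n}. pmf \<pi> (card S) / real (n choose card S) * wt n S A) =
              (\<Sum>S\<in>Pow {..<n}. (\<integral>\<alpha>. \<alpha>^card S * (1-\<alpha>)^(n - card S) \<partial>L) * wt n S A)"
          by (intro sum.cong refl) (simp only: coef)
        then show ?thesis unfolding m s by simp
      qed
    next
      show "range (\<lambda>_. PiE {..<n} (\<lambda>_. UNIV)) \<subseteq> prod_algebra {..<n} (\<lambda>_. borel)"
        by (auto intro!: prod_algebraI_finite)
      show "(\<Union>i::nat. PiE {..<n} (\<lambda>_. UNIV)) = space (PiM {..<n} (\<lambda>_. borel))"
        by (simp add: space_PiM)
      show "emeasure (model_selection_prior n \<pi> G) (PiE {..<n} (\<lambda>_. UNIV)) \<noteq> \<infinity>" for i :: nat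
      proof -
        have "emeasure (model_selection_prior n \<pi> G) (PiE {..<n} (\<lambda>_. UNIV)) \<le> 1"
          by (rule prob_space.emeasure_le_1[OF MS_prob])
        then have "emeasure (model_selection_prior n \<pi> G) (PiE {..<n} (\<lambda>_. UNIV)) < \<top>"
          using ennreal_one_less_top by (rule le_less_trans)
        then show ?thesis by simp
      qed
    qed
  qed
  then show "has_spike_slab_form n \<pi> G" .
qed

end

lemma G0_density:
  fixes f :: "real \<Rightarrow> ennreal"
  assumes "f \<in> borel_measurable borel" "G = density lborel f"
  shows "measure G {0} = 0"
proof -
  have fm: "f \<in> borel_measurable lborel" using assms(1) by simp
  have "{0} \<in> null_sets (density lborel f)"
  proof -
    have "AE x in lborel. x \<in> {0::real} \<longrightarrow> f x = 0"
      using AE_lborel_singleton[of "0::real"] by (rule eventually_mono) simp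
    then show ?thesis unfolding null_sets_density_iff[OF fm] by simp
  qed
  then have "emeasure G {0} = 0" using assms(2) by (simp add: null_setsD1)
  then show ?thesis by (simp add: measure_def)
qed

lemma sufficiency:
  fixes \<pi> :: "nat pmf"
  assumes \<pi>: "set_pmf \<pi> \<subseteq> {..n}" and c: "c \<in> {0..pmf \<pi> n}"
    and psdA: "psd k (hankel k (mu_vec n \<pi> c))" and psdB: "psd d (hankel d (shiftF (mu_vec n \<pi> c)))"
    and n: "2*k \<le> n" "2*d+1 \<le> n" "n \<le> 2*k+1" "n \<le> 2*d+2"
  shows "\<exists>L. BM n \<pi> L"
proof -
  define b where "b j = pmf \<pi> j / real (n choose j)" for j
  have pos: "(\<Sum>j\<le>n. y j * b j) \<ge> 0"
    if "\<And>\<alpha>. 0 \<le> \<alpha> \<Longrightarrow> \<alpha> \<le> 1 \<Longrightarrow> (\<Sum>j\<le>n. y j * (\<alpha>^j*(1-\<alpha>)^(n-j))) \<ge> 0" for y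
    unfolding b_def by (rule functional_pos[OF c psdA psdB n]) (use that in auto)
  have sumb: "(\<Sum>j\<le>n. real (n choose j) * b j) = 1"
  proof -
    have "(\<Sum>j\<le>n. real (n choose j) * b j) = (\<Sum>j\<le>n. pmf \<pi> j)"
      by (intro sum.cong refl) (simp add: b_def)
    also have "\<dots> = 1" by (rule sum_pmf_eq_1) (use \<pi> in auto)
    finally show ?thesis .
  qed
  obtain \<Lambda> where K: "\<Lambda> \<in> Kset" and m: "\<forall>j\<le>n. (\<integral>x. cg n j x \<partial>\<Lambda>) = b j"
    using exists_rep[of n b, OF pos sumb] by blast
  have "BM n \<pi> \<Lambda>" unfolding BM_def
    using KsetD[OF K] m cg_integral_eq[OF K] by (simp add: b_def)
  then show ?thesis by blast
qed

theorem theorem2: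
  fixes n :: nat and \<pi> :: "nat pmf" and G :: "real measure"
  assumes "n \<ge> 1"
    and "set_pmf \<pi> \<subseteq> {..n}"
    and "prob_space G" and "sets G = sets (borel :: real measure)"
    and "\<exists>f. f \<in> borel_measurable borel \<and> G = density lborel f"
  shows "(\<forall>k. n = 2 * k + 1 \<longrightarrow>
            (has_spike_slab_form n \<pi> G \<longleftrightarrow>
             (\<exists>c \<in> {0..pmf \<pi> n}.
                psd k (hankel k (mu_vec n \<pi> c)) \<and>
                psd k (hankel k (shiftF (mu_vec n \<pi> c))) \<and>
                in_range k (\<lambda>i. mu_vec n \<pi> c (k + 1 + i)) (hankel k (mu_vec n \<pi> c)))))
       \<and> (\<forall>k. n = 2 * k \<longrightarrow>
            (has_spike_slab_form n \<pi> G \<longleftrightarrow>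
             (\<exists>c \<in> {0..pmf \<pi> n}.
                psd k (hankel k (mu_vec n \<pi> c)) \<and>
                psd (k - 1) (hankel (k - 1) (shiftF (mu_vec n \<pi> c))) \<and>
                in_range (k - 1) (\<lambda>i. mu_vec n \<pi> c (k + 1 + i))
                  (hankel (k - 1) (shiftF (mu_vec n \<pi> c))))))"
proof -
  interpret Gassm G by (rule Gassm.intro[OF assms(3,4)])
  obtain f where f: "f \<in> borel_measurable borel" "G = density lborel f" using assms(5) by blast
  have G0: "measure G {0} = 0" by (rule G0_density[OF f])
  have E: "has_spike_slab_form n \<pi> G \<longleftrightarrow> (\<exists>L. BM n \<pi> L)" by (rule A_equiv[OF assms(2) G0])
  show ?thesis
  proof (intro conjI allI impI)
    fix k assume n: "n = 2 * k + 1"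
    show "has_spike_slab_form n \<pi> G \<longleftrightarrow>
             (\<exists>c \<in> {0..pmf \<pi> n}.
                psd k (hankel k (mu_vec n \<pi> c)) \<and>
                psd k (hankel k (shiftF (mu_vec n \<pi> c))) \<and>
                in_range k (\<lambda>i. mu_vec n \<pi> c (k + 1 + i)) (hankel k (mu_vec n \<pi> c)))"
    proof
      assume "has_spike_slab_form n \<pi> G"
      then obtain L where "BM n \<pi> L" using E by blast
      have N: "n = 2 * k + 1 \<longrightarrow> (\<exists>c \<in> {0..pmf \<pi> n}.
                psd k (hankel k (mu_vec n \<pi> c)) \<and>
                psd k (hankel k (shiftF (mu_vec n \<pi> c))) \<and>
                in_range k (\<lambda>i. mu_vec n \<pi> c (k + 1 + i)) (hankel k (mu_vec n \<pi> c)))"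
        using conjunct1[OF necessity[OF \<open>BM n \<pi> L\<close> assms(1)]] by (rule spec)
      from mp[OF N n] show "\<exists>c \<in> {0..pmf \<pi> n}.
                psd k (hankel k (mu_vec n \<pi> c)) \<and>
                psd k (hankel k (shiftF (mu_vec n \<pi> c))) \<and>
                in_range k (\<lambda>i. mu_vec n \<pi> c (k + 1 + i)) (hankel k (mu_vec n \<pi> c))" .
    next
      assume "\<exists>c \<in> {0..pmf \<pi> n}.
                psd k (hankel k (mu_vec n \<pi> c)) \<and>
                psd k (hankel k (shiftF (mu_vec n \<pi> c))) \<and>
                in_range k (\<lambda>i. mu_vec n \<pi> c (k + 1 + i)) (hankel k (mu_vec n \<pi> c))"
      then obtain c where c: "c \<in> {0..pmf \<pi> n}" "psd k (hankel k (mu_vec n \<pi> c))"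
        "psd k (hankel k (shiftF (mu_vec n \<pi> c)))" by blast
      have "\<exists>L. BM n \<pi> L" by (rule sufficiency[OF assms(2) c]) (use n in auto)
      then show "has_spike_slab_form n \<pi> G" using E by blast
    qed
  next
    fix k assume n: "n = 2 * k"
    with assms(1) have k: "k \<ge> 1" by simp
    show "has_spike_slab_form n \<pi> G \<longleftrightarrow>
             (\<exists>c \<in> {0..pmf \<pi> n}.
                psd k (hankel k (mu_vec n \<pi> c)) \<and>
                psd (k - 1) (hankel (k - 1) (shiftF (mu_vec n \<pi> c))) \<and>
                in_range (k - 1) (\<lambda>i. mu_vec n \<pi> c (k + 1 + i))
                  (hankel (k - 1) (shiftF (mu_vec n \<pi> c))))"
    proof
      assume "has_spike_slab_form n \<pi> G"
      then obtain L where "BM n \<pi> L" using E by blast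
      have N: "n = 2 * k \<longrightarrow> (\<exists>c \<in> {0..pmf \<pi> n}.
                psd k (hankel k (mu_vec n \<pi> c)) \<and>
                psd (k - 1) (hankel (k - 1) (shiftF (mu_vec n \<pi> c))) \<and>
                in_range (k - 1) (\<lambda>i. mu_vec n \<pi> c (k + 1 + i))
                  (hankel (k - 1) (shiftF (mu_vec n \<pi> c))))"
        using conjunct2[OF necessity[OF \<open>BM n \<pi> L\<close> assms(1)]] by (rule spec)
      from mp[OF N n] show "\<exists>c \<in> {0..pmf \<pi> n}.
                psd k (hankel k (mu_vec n \<pi> c)) \<and>
                psd (k - 1) (hankel (k - 1) (shiftF (mu_vec n \<pi> c))) \<and>
                in_range (k - 1) (\<lambda>i. mu_vec n \<pi> c (k + 1 + i))
                  (hankel (k - 1) (shiftF (mu_vec n \<pi> c)))" .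
    next
      assume "\<exists>c \<in> {0..pmf \<pi> n}.
                psd k (hankel k (mu_vec n \<pi> c)) \<and>
                psd (k - 1) (hankel (k - 1) (shiftF (mu_vec n \<pi> c))) \<and>
                in_range (k - 1) (\<lambda>i. mu_vec n \<pi> c (k + 1 + i))
                  (hankel (k - 1) (shiftF (mu_vec n \<pi> c)))"
      then obtain c where c: "c \<in> {0..pmf \<pi> n}" "psd k (hankel k (mu_vec n \<pi> c))"
        "psd (k - 1) (hankel (k - 1) (shiftF (mu_vec n \<pi> c)))" by blast
      have "\<exists>L. BM n \<pi> L" by (rule sufficiency[OF assms(2) c]) (use n k in auto)
      then show "has_spike_slab_form n \<pi> G" using E by blast
    qed
  qed
qed


end
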